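(* Let $A$ be an algebra of Jordan type half over a field $\mathbb{F}$ of characteristic zero. If $a,b\in A$ are primitive axes of Jordan type half with $(a,b)=0$ or $(a,b)=1$, then $J=\langle\langle a,b\rangle\rangle$ is solid.
   Context: All algebras are commutative but not necessarily associative. For an element $x$ of an algebra $A$ and $\lambda\in\mathbb{F}$ write $A_\lambda(x)=\{u\in A: xu=\lambda u\}$. A primitive axis of Jordan type half in $A$ is an element $x\neq 0$ with $x^2=x$, $A=A_1(x)\oplus A_0(x)\oplus A_{1/2}(x)$, $A_1(x)=\mathbb{F}x$, and the fusion rules $A_1A_1\subseteq A_1$, $A_1A_0=0$, $A_0A_0\subseteq A_0$, $A_1A_{1/2}\subseteq A_{1/2}$, $A_0A_{1/2}\subseteq A_{1/2}$, $A_{1/2}A_{1/2}\subseteq A_1\oplus A_0$ (eigenspaces of $x$). An algebra of Jordan type half is a commutative algebra generated by primitive axes of Jordan type half. Such an algebra has a unique Frobenius form $(\cdot,\cdot)$: a bilinear form with $(uv,w)=(u,vw)$ and $(x,x)=1$ for every primitive axis $x$. $\langle\langle a,b\rangle\rangle$ denotes the subalgebra generated by $a,b$. Such a subalgebra $J$ is solid if every idempotent $c\in J$ with $c\neq0$ and $c\neq 1_J$ (the identity of $J$, if $J$ has one) is a primitive axis of Jordan type half in $A$. *)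

theory Defs
  imports Complex_Main
begin

definition comm_algebra :: "('a::field \<Rightarrow> 'v::ab_group_add \<Rightarrow> 'v) \<Rightarrow> ('v \<Rightarrow> 'v \<Rightarrow> 'v) \<Rightarrow> bool" where
  "comm_algebra sc m \<longleftrightarrow> vector_space sc \<and> (\<forall>u v. m u v = m v u)
     \<and> (\<forall>u v w. m (u + v) w = m u w + m v w)
     \<and> (\<forall>c u w. m (sc c u) w = sc c (m u w))"

definition eigsp :: "('a::field \<Rightarrow> 'v::ab_group_add \<Rightarrow> 'v) \<Rightarrow> ('v \<Rightarrow> 'v \<Rightarrow> 'v) \<Rightarrow> 'v \<Rightarrow> 'a \<Rightarrow> 'v set" where
  "eigsp sc m x l = {u. m x u = sc l u}"

definition prim_axis_half :: "('a::field \<Rightarrow> 'v::ab_group_add \<Rightarrow> 'v) \<Rightarrow> ('v \<Rightarrow> 'v \<Rightarrow> 'v) \<Rightarrow> 'v \<Rightarrow> bool" where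
  "prim_axis_half sc m x \<longleftrightarrow>
     (let A1 = eigsp sc m x 1; A0 = eigsp sc m x 0; Ah = eigsp sc m x (1/2) in
       x \<noteq> 0 \<and> m x x = x
     \<and> (\<forall>u. \<exists>u1 u0 uh. u1 \<in> A1 \<and> u0 \<in> A0 \<and> uh \<in> Ah \<and> u = u1 + u0 + uh)
     \<and> A1 = {sc c x | c. True}
     \<and> (\<forall>u\<in>A1. \<forall>v\<in>A1. m u v \<in> A1)
     \<and> (\<forall>u\<in>A1. \<forall>v\<in>A0. m u v = 0)
     \<and> (\<forall>u\<in>A0. \<forall>v\<in>A0. m u v \<in> A0)
     \<and> (\<forall>u\<in>A1. \<forall>v\<in>Ah. m u v \<in> Ah)
     \<and> (\<forall>u\<in>A0. \<forall>v\<in>Ah. m u v \<in> Ah)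
     \<and> (\<forall>u\<in>Ah. \<forall>v\<in>Ah. \<exists>w1 w0. w1 \<in> A1 \<and> w0 \<in> A0 \<and> m u v = w1 + w0))"

definition gen_subalg :: "('a::field \<Rightarrow> 'v::ab_group_add \<Rightarrow> 'v) \<Rightarrow> ('v \<Rightarrow> 'v \<Rightarrow> 'v) \<Rightarrow> 'v set \<Rightarrow> 'v set" where
  "gen_subalg sc m S = \<Inter> {B. module.subspace sc B \<and> (\<forall>u\<in>B. \<forall>v\<in>B. m u v \<in> B) \<and> S \<subseteq> B}"

definition jordan_type_half :: "('a::field \<Rightarrow> 'v::ab_group_add \<Rightarrow> 'v) \<Rightarrow> ('v \<Rightarrow> 'v \<Rightarrow> 'v) \<Rightarrow> bool" where
  "jordan_type_half sc m \<longleftrightarrow> comm_algebra sc m \<and> gen_subalg sc m {x. prim_axis_half sc m x} = UNIV"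

definition frobenius_form :: "('a::field \<Rightarrow> 'v::ab_group_add \<Rightarrow> 'v) \<Rightarrow> ('v \<Rightarrow> 'v \<Rightarrow> 'v) \<Rightarrow> ('v \<Rightarrow> 'v \<Rightarrow> 'a) \<Rightarrow> bool" where
  "frobenius_form sc m f \<longleftrightarrow>
     (\<forall>u v w. f (u + v) w = f u w + f v w) \<and> (\<forall>c u w. f (sc c u) w = c * f u w)
   \<and> (\<forall>u v w. f u (v + w) = f u v + f u w) \<and> (\<forall>c u w. f u (sc c w) = c * f u w)
   \<and> (\<forall>u v w. f (m u v) w = f u (m v w))
   \<and> (\<forall>x. prim_axis_half sc m x \<longrightarrow> f x x = 1)"

definition solid :: "('a::field \<Rightarrow> 'v::ab_group_add \<Rightarrow> 'v) \<Rightarrow> ('v \<Rightarrow> 'v \<Rightarrow> 'v) \<Rightarrow> 'v set \<Rightarrow> bool" where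
  "solid sc m J \<longleftrightarrow> (\<forall>c\<in>J. m c c = c \<and> c \<noteq> 0 \<and> \<not> (\<forall>u\<in>J. m c u = u) \<longrightarrow> prim_axis_half sc m c)"

end

theory Submission
  imports Defs "HOL-Computational_Algebra.Polynomial"
begin


definition lp :: "('a::field \<Rightarrow> 'v::ab_group_add \<Rightarrow> 'v) \<Rightarrow> (nat \<times> 'v) list \<Rightarrow> 'a \<Rightarrow> 'v" where
  "lp sc L t = sum_list (map (\<lambda>(i,v). sc (t^i) v) L)"

lemma lp_Nil[simp]: "lp sc [] t = 0" by (simp add: lp_def)
lemma lp_Cons[simp]: "lp sc ((i,v)#L) t = sc (t^i) v + lp sc L t" by (simp add: lp_def)
lemma lp_append[simp]: "lp sc (L1 @ L2) t = lp sc L1 t + lp sc L2 t" by (simp add: lp_def)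

lemma vs_self: "vector_space ((*) :: 'a::field \<Rightarrow> 'a \<Rightarrow> 'a)"
  by unfold_locales (auto simp: algebra_simps)

definition pl :: "('v \<Rightarrow> 'a::field) \<Rightarrow> (nat \<times> 'v) list \<Rightarrow> 'a poly" where
  "pl g L = sum_list (map (\<lambda>(i,v). monom (g v) i) L)"

context vector_space
begin

lemma lp_lin:
  assumes "Vector_Spaces.linear scale (*) g"
  shows "g (lp scale L t) = poly (pl g L) t"
proof -
  interpret vector_space_pair scale "(*)" using vs_self by (simp add: vector_space_pair_def vector_space_axioms)
  show ?thesis
proof (induction L)
  case Nil
  then show ?case using assms by (simp add: pl_def linear_0[OF assms])
next
  case (Cons a L)
  obtain i v where a: "a = (i,v)" by force
  interpret vector_space_pair scale "(*)" using vs_self by (simp add: vector_space_pair_def vector_space_axioms)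
  show ?case using Cons assms
    by (simp add: a pl_def linear_add linear_scale poly_monom)
qed
qed

lemma lp_zero:
  assumes inf: "infinite {t. lp scale L t = 0}"
  shows "lp scale L s = 0"
proof (rule ccontr)
  assume ne: "lp scale L s \<noteq> 0"
  interpret P: vector_space_pair scale "(*)" using vs_self by (simp add: vector_space_pair_def vector_space_axioms)
  have "independent {lp scale L s}"
    using ne by (intro independent_insertI) (auto simp: span_empty independent_empty)
  from P.linear_independent_extend[OF this, of "\<lambda>_. 1"]
  obtain g where g: "Vector_Spaces.linear scale (*) g" "g (lp scale L s) = 1" by auto
  have "pl g L = 0"
  proof (rule ccontr)
    assume "pl g L \<noteq> 0"
    hence "finite {t. poly (pl g L) t = 0}" by (rule poly_roots_finite)
    moreover have "{t. lp scale L t = 0} \<subseteq> {t. poly (pl g L) t = 0}"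
      using lp_lin[OF g(1)] P.linear_0[OF g(1)] by (metis (mono_tags, lifting) mem_Collect_eq subsetI)
    ultimately show False using inf finite_subset by blast
  qed
  thus False using lp_lin[OF g(1), of L s] g(2) by simp
qed

end



locale jalg = vector_space scale
  for scale :: "'a::field_char_0 \<Rightarrow> 'v::ab_group_add \<Rightarrow> 'v" (infixr \<open>*s\<close> 75) +
  fixes m :: "'v \<Rightarrow> 'v \<Rightarrow> 'v" (infixl \<open>\<cdot>\<close> 70)
  assumes comm: "u \<cdot> v = v \<cdot> u"
    and addL: "(u + v) \<cdot> w = u \<cdot> w + v \<cdot> w"
    and scL: "(c *s u) \<cdot> w = c *s (u \<cdot> w)"
begin

lemma addR: "w \<cdot> (u + v) = w \<cdot> u + w \<cdot> v"
proof -
  have "w \<cdot> (u + v) = (u + v) \<cdot> w" by (rule comm)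
  also have "\<dots> = u \<cdot> w + v \<cdot> w" by (rule addL)
  also have "\<dots> = w \<cdot> u + w \<cdot> v" using comm[of u w] comm[of v w] by simp
  finally show ?thesis .
qed
lemma scR: "w \<cdot> (c *s u) = c *s (w \<cdot> u)"
proof -
  have "w \<cdot> (c *s u) = (c *s u) \<cdot> w" by (rule comm)
  also have "\<dots> = c *s (u \<cdot> w)" by (rule scL)
  also have "\<dots> = c *s (w \<cdot> u)" using comm[of u w] by simp
  finally show ?thesis .
qed
lemma zeroL[simp]: "0 \<cdot> u = 0"
proof -
  have "0 \<cdot> u = 0 \<cdot> u + 0 \<cdot> u" using addL[of 0 0 u] by simp
  thus ?thesis by simp
qed
lemma zeroR[simp]: "u \<cdot> 0 = 0"
  using zeroL comm[of u 0] by simp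
lemma negL: "(- u) \<cdot> w = - (u \<cdot> w)"
proof -
  have "(- u) \<cdot> w + u \<cdot> w = (- u + u) \<cdot> w" by (rule addL[symmetric])
  also have "\<dots> = 0" by simp
  finally show ?thesis by (simp add: add_eq_0_iff2)
qed
lemma negR: "w \<cdot> (- u) = - (w \<cdot> u)"
proof -
  have "w \<cdot> (- u) = (- u) \<cdot> w" by (rule comm)
  also have "\<dots> = - (u \<cdot> w)" by (rule negL)
  also have "\<dots> = - (w \<cdot> u)" by (simp only: comm[of u w])
  finally show ?thesis .
qed
lemma diffL: "(u - v) \<cdot> w = u \<cdot> w - v \<cdot> w"
  by (simp only: diff_conv_add_uminus addL negL)
lemma diffR: "w \<cdot> (u - v) = w \<cdot> u - w \<cdot> v"
  by (simp only: diff_conv_add_uminus addR negR)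

lemmas abel_simps = diff_conv_add_uminus minus_add_distrib minus_minus add_0_left add_0_right minus_zero add_ac

lemmas mlin = addL addR scL scR negL negR diffL diffR

definition lc3 :: "'v \<Rightarrow> 'v \<Rightarrow> 'v \<Rightarrow> 'a \<Rightarrow> 'a \<Rightarrow> 'a \<Rightarrow> 'v" where
  "lc3 u v w a b c = a *s u + b *s v + c *s w"

lemma lc3_add[simp]: "lc3 u v w a b c + lc3 u v w a' b' c' = lc3 u v w (a+a') (b+b') (c+c')"
  by (simp add: lc3_def scale_left_distrib add_ac)
lemma lc3_neg[simp]: "- lc3 u v w a b c = lc3 u v w (-a) (-b) (-c)"
  by (simp add: lc3_def scale_minus_left add_ac)
lemma lc3_diff[simp]: "lc3 u v w a b c - lc3 u v w a' b' c' = lc3 u v w (a-a') (b-b') (c-c')"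
proof -
  have "lc3 u v w a b c - lc3 u v w a' b' c' = lc3 u v w a b c + (- lc3 u v w a' b' c')"
    by (simp only: diff_conv_add_uminus)
  also have "\<dots> = lc3 u v w (a-a') (b-b') (c-c')" by (simp only: lc3_neg lc3_add diff_conv_add_uminus)
  finally show ?thesis .
qed
lemma lc3_scale[simp]: "d *s lc3 u v w a b c = lc3 u v w (d*a) (d*b) (d*c)"
  by (simp add: lc3_def scale_right_distrib)
lemma lc3_cong: "a = a' \<Longrightarrow> b = b' \<Longrightarrow> c = c' \<Longrightarrow> lc3 u v w a b c = lc3 u v w a' b' c'"
  by simp
lemma lc3_1: "u = lc3 u v w 1 0 0" and lc3_2: "v = lc3 u v w 0 1 0" and lc3_3: "w = lc3 u v w 0 0 1"
  by (simp_all add: lc3_def)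

definition P1 where "P1 x u = 2 *s (x \<cdot> (x \<cdot> u)) - x \<cdot> u"
definition P0 where "P0 x u = 2 *s (x \<cdot> (x \<cdot> u)) - 3 *s (x \<cdot> u) + u"
definition Ph where "Ph x u = 4 *s (x \<cdot> u) - 4 *s (x \<cdot> (x \<cdot> u))"

lemma P_sum: "P1 x u + P0 x u + Ph x u = u"
proof -
  have "P1 x u = lc3 (x \<cdot> (x \<cdot> u)) (x \<cdot> u) u 2 (-1) 0"
    "P0 x u = lc3 (x \<cdot> (x \<cdot> u)) (x \<cdot> u) u 2 (-3) 1"
    "Ph x u = lc3 (x \<cdot> (x \<cdot> u)) (x \<cdot> u) u (-4) 4 0"
    by (simp_all add: P1_def P0_def Ph_def lc3_def)
  thus ?thesis by (simp add: lc3_3[symmetric])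
qed

lemma eig_lc3:
  assumes "x \<cdot> u1 = u1" "x \<cdot> u0 = 0" "x \<cdot> uh = (1/2) *s uh"
  shows "x \<cdot> lc3 u1 u0 uh a b c = lc3 u1 u0 uh a 0 (c/2)"
  using assms by (simp add: lc3_def mlin)

lemma decomp_P:
  assumes "x \<cdot> u1 = u1" "x \<cdot> u0 = 0" "x \<cdot> uh = (1/2) *s uh"
  shows "P1 x (u1 + u0 + uh) = u1" "P0 x (u1 + u0 + uh) = u0" "Ph x (u1 + u0 + uh) = uh"
proof -
  have e: "u1 + u0 + uh = lc3 u1 u0 uh 1 1 1" by (simp add: lc3_def)
  note E = eig_lc3[OF assms]
  show "P1 x (u1 + u0 + uh) = u1" unfolding e P1_def E by (simp only: lc3_scale lc3_diff lc3_add) (simp add: lc3_1[symmetric])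
  show "P0 x (u1 + u0 + uh) = u0" unfolding e P0_def E by (simp only: lc3_scale lc3_diff lc3_add) (simp add: lc3_2[symmetric])
  show "Ph x (u1 + u0 + uh) = uh" unfolding e Ph_def E by (simp only: lc3_scale lc3_diff lc3_add) (simp add: lc3_3[symmetric])
qed

abbreviation half where "half u \<equiv> (1/2::'a) *s u"

lemma ax_iff: "prim_axis_half scale m x \<longleftrightarrow> x \<noteq> 0 \<and> x \<cdot> x = x
  \<and> (\<forall>u. \<exists>u1 u0 uh. x \<cdot> u1 = u1 \<and> x \<cdot> u0 = 0 \<and> x \<cdot> uh = half uh \<and> u = u1 + u0 + uh)
  \<and> (\<forall>u. x \<cdot> u = u \<longrightarrow> (\<exists>c. u = c *s x))
  \<and> (\<forall>u. x \<cdot> u = u \<longrightarrow> (\<forall>v. x \<cdot> v = v \<longrightarrow> x \<cdot> (u \<cdot> v) = u \<cdot> v))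
  \<and> (\<forall>u. x \<cdot> u = u \<longrightarrow> (\<forall>v. x \<cdot> v = 0 \<longrightarrow> u \<cdot> v = 0))
  \<and> (\<forall>u. x \<cdot> u = 0 \<longrightarrow> (\<forall>v. x \<cdot> v = 0 \<longrightarrow> x \<cdot> (u \<cdot> v) = 0))
  \<and> (\<forall>u. x \<cdot> u = u \<longrightarrow> (\<forall>v. x \<cdot> v = half v \<longrightarrow> x \<cdot> (u \<cdot> v) = half (u \<cdot> v)))
  \<and> (\<forall>u. x \<cdot> u = 0 \<longrightarrow> (\<forall>v. x \<cdot> v = half v \<longrightarrow> x \<cdot> (u \<cdot> v) = half (u \<cdot> v)))
  \<and> (\<forall>u. x \<cdot> u = half u \<longrightarrow> (\<forall>v. x \<cdot> v = half v \<longrightarrow> (\<exists>w1 w0. x \<cdot> w1 = w1 \<and> x \<cdot> w0 = 0 \<and> u \<cdot> v = w1 + w0)))"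
proof -
  have E: "eigsp scale m x 1 = {u. x \<cdot> u = u}" "eigsp scale m x 0 = {u. x \<cdot> u = 0}"
    "eigsp scale m x (1/2) = {u. x \<cdot> u = half u}" by (auto simp: eigsp_def)
  have S: "x \<cdot> x = x \<Longrightarrow> ({u. x \<cdot> u = u} = {c *s x |c. True}) \<longleftrightarrow> (\<forall>u. x \<cdot> u = u \<longrightarrow> (\<exists>c. u = c *s x))"
  proof
    assume eq: "{u. x \<cdot> u = u} = {c *s x |c. True}"
    show "\<forall>u. x \<cdot> u = u \<longrightarrow> (\<exists>c. u = c *s x)"
    proof (intro allI impI)
      fix u assume "x \<cdot> u = u"
      hence "u \<in> {u. x \<cdot> u = u}" by (rule CollectI)
      hence "u \<in> {c *s x |c. True}" by (simp only: eq)
      thus "\<exists>c. u = c *s x" by (simp only: mem_Collect_eq simp_thms)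
    qed
  next
    assume xx: "x \<cdot> x = x" and h: "\<forall>u. x \<cdot> u = u \<longrightarrow> (\<exists>c. u = c *s x)"
    show "{u. x \<cdot> u = u} = {c *s x |c. True}"
    proof (intro set_eqI iffI)
      fix u assume "u \<in> {u. x \<cdot> u = u}"
      then obtain c where "u = c *s x" using h by (simp only: mem_Collect_eq) blast
      thus "u \<in> {c *s x |c. True}" by (simp only: mem_Collect_eq simp_thms) blast
    next
      fix u assume "u \<in> {c *s x |c. True}"
      then obtain c where "u = c *s x" by (simp only: mem_Collect_eq simp_thms) blast
      thus "u \<in> {u. x \<cdot> u = u}" using xx by (simp add: scR)
    qed
  qed
  show ?thesis
    apply (simp only: prim_axis_half_def Let_def eigsp_def Ball_def mem_Collect_eq scale_one scale_zero_left)
    apply (rule conj_cong[OF refl])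
    apply (rule conj_cong[OF refl])
    apply (rule conj_cong[OF refl])
    apply (rule conj_cong)
     apply (erule S)
    apply (rule refl)
    done
qed

lemma ax_facts:
  assumes "prim_axis_half scale m x"
  shows ax_ne: "x \<noteq> 0" and ax_idem: "x \<cdot> x = x"
  and ax_dec: "\<exists>u1 u0 uh. x \<cdot> u1 = u1 \<and> x \<cdot> u0 = 0 \<and> x \<cdot> uh = half uh \<and> u = u1 + u0 + uh"
  and ax_a1: "x \<cdot> u = u \<Longrightarrow> \<exists>c. u = c *s x"
  and ax_f11: "x \<cdot> u = u \<Longrightarrow> x \<cdot> v = v \<Longrightarrow> x \<cdot> (u \<cdot> v) = u \<cdot> v"
  and ax_f10: "x \<cdot> u = u \<Longrightarrow> x \<cdot> v = 0 \<Longrightarrow> u \<cdot> v = 0"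
  and ax_f00: "x \<cdot> u = 0 \<Longrightarrow> x \<cdot> v = 0 \<Longrightarrow> x \<cdot> (u \<cdot> v) = 0"
  and ax_f1h: "x \<cdot> u = u \<Longrightarrow> x \<cdot> v = half v \<Longrightarrow> x \<cdot> (u \<cdot> v) = half (u \<cdot> v)"
  and ax_f0h: "x \<cdot> u = 0 \<Longrightarrow> x \<cdot> v = half v \<Longrightarrow> x \<cdot> (u \<cdot> v) = half (u \<cdot> v)"
  and ax_fhh: "x \<cdot> u = half u \<Longrightarrow> x \<cdot> v = half v \<Longrightarrow> \<exists>w1 w0. x \<cdot> w1 = w1 \<and> x \<cdot> w0 = 0 \<and> u \<cdot> v = w1 + w0"
  using assms unfolding ax_iff by blast+

lemma axI:
  assumes "x \<noteq> 0" "x \<cdot> x = x"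
  and "\<And>u. \<exists>u1 u0 uh. x \<cdot> u1 = u1 \<and> x \<cdot> u0 = 0 \<and> x \<cdot> uh = half uh \<and> u = u1 + u0 + uh"
  and "\<And>u. x \<cdot> u = u \<Longrightarrow> \<exists>c. u = c *s x"
  and "\<And>u v. x \<cdot> u = u \<Longrightarrow> x \<cdot> v = v \<Longrightarrow> x \<cdot> (u \<cdot> v) = u \<cdot> v"
  and "\<And>u v. x \<cdot> u = u \<Longrightarrow> x \<cdot> v = 0 \<Longrightarrow> u \<cdot> v = 0"
  and "\<And>u v. x \<cdot> u = 0 \<Longrightarrow> x \<cdot> v = 0 \<Longrightarrow> x \<cdot> (u \<cdot> v) = 0"
  and "\<And>u v. x \<cdot> u = u \<Longrightarrow> x \<cdot> v = half v \<Longrightarrow> x \<cdot> (u \<cdot> v) = half (u \<cdot> v)"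
  and "\<And>u v. x \<cdot> u = 0 \<Longrightarrow> x \<cdot> v = half v \<Longrightarrow> x \<cdot> (u \<cdot> v) = half (u \<cdot> v)"
  and "\<And>u v. x \<cdot> u = half u \<Longrightarrow> x \<cdot> v = half v \<Longrightarrow> \<exists>w1 w0. x \<cdot> w1 = w1 \<and> x \<cdot> w0 = 0 \<and> u \<cdot> v = w1 + w0"
  shows "prim_axis_half scale m x"
  unfolding ax_iff
  by (intro conjI allI impI; (rule assms; assumption)?; rule assms)

lemma lc3_cdot: "w \<cdot> lc3 u v y a b c = lc3 (w \<cdot> u) (w \<cdot> v) (w \<cdot> y) a b c"
  by (simp add: lc3_def mlin)

lemma P_lin:
  "P1 x (u + v) = P1 x u + P1 x v" "P0 x (u + v) = P0 x u + P0 x v" "Ph x (u + v) = Ph x u + Ph x v"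
  "P1 x (c *s u) = c *s P1 x u" "P0 x (c *s u) = c *s P0 x u" "Ph x (c *s u) = c *s Ph x u"
  by (simp_all add: P1_def P0_def Ph_def mlin algebra_simps scale_right_distrib scale_right_diff_distrib)

lemma P1_eig: "x \<cdot> (P1 x u) - P1 x u = x \<cdot> P0 x u"
proof -
  define Y1 where "Y1 = x \<cdot> u"
  define Y2 where "Y2 = x \<cdot> Y1"
  define Y3 where "Y3 = x \<cdot> Y2"
  have a: "x \<cdot> P1 x u = lc3 Y3 Y2 Y1 2 (-1) 0" "P1 x u = lc3 Y3 Y2 Y1 0 2 (-1)"
     "x \<cdot> P0 x u = lc3 Y3 Y2 Y1 2 (-3) 1"
    by (simp_all add: Y1_def Y2_def Y3_def P1_def P0_def lc3_def mlin)
  show ?thesis unfolding a(1) a(3) unfolding a(2) by simp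
qed

lemma Ph_eig: "x \<cdot> (Ph x u) - half (Ph x u) = - 2 *s (x \<cdot> P0 x u)"
proof -
  define Y1 where "Y1 = x \<cdot> u"
  define Y2 where "Y2 = x \<cdot> Y1"
  define Y3 where "Y3 = x \<cdot> Y2"
  have a: "x \<cdot> Ph x u = lc3 Y3 Y2 Y1 (-4) 4 0" "Ph x u = lc3 Y3 Y2 Y1 0 (-4) 4"
     "x \<cdot> P0 x u = lc3 Y3 Y2 Y1 2 (-3) 1"
    by (simp_all add: Y1_def Y2_def Y3_def Ph_def P0_def lc3_def mlin)
  show ?thesis unfolding a(1) a(3) unfolding a(2) by simp
qed

lemma P_of_eig:
  "x \<cdot> u = u \<Longrightarrow> P1 x u = u" "x \<cdot> u = u \<Longrightarrow> P0 x u = 0" "x \<cdot> u = u \<Longrightarrow> Ph x u = 0"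
  "x \<cdot> u = 0 \<Longrightarrow> P1 x u = 0" "x \<cdot> u = 0 \<Longrightarrow> P0 x u = u" "x \<cdot> u = 0 \<Longrightarrow> Ph x u = 0"
  "x \<cdot> u = half u \<Longrightarrow> P1 x u = 0" "x \<cdot> u = half u \<Longrightarrow> P0 x u = 0" "x \<cdot> u = half u \<Longrightarrow> Ph x u = u"
  using decomp_P[of x u 0 0] decomp_P[of x 0 u 0] decomp_P[of x 0 0 u] by simp_all


lemma ax_P:
  assumes "prim_axis_half scale m x"
  shows "x \<cdot> P1 x u = P1 x u" "x \<cdot> P0 x u = 0" "x \<cdot> Ph x u = half (Ph x u)"
proof -
  obtain u1 u0 uh where d: "x \<cdot> u1 = u1" "x \<cdot> u0 = 0" "x \<cdot> uh = half uh" "u = u1 + u0 + uh"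
    using assms unfolding ax_iff by blast
  show "x \<cdot> P1 x u = P1 x u" "x \<cdot> P0 x u = 0" "x \<cdot> Ph x u = half (Ph x u)"
    using decomp_P[OF d(1-3)] d by simp_all
qed


definition tau where "tau x u = P1 x u + P0 x u - Ph x u"

lemma tau_add: "tau x (u + v) = tau x u + tau x v"
  by (simp only: tau_def P_lin abel_simps)
lemma tau_scale: "tau x (c *s u) = c *s tau x u"
  by (simp add: tau_def P_lin scale_right_distrib scale_right_diff_distrib)

lemma tau_dec:
  assumes "x \<cdot> u1 = u1" "x \<cdot> u0 = 0" "x \<cdot> uh = half uh"
  shows "tau x (u1 + u0 + uh) = u1 + u0 - uh"
  using decomp_P[OF assms] by (simp add: tau_def)

lemma tau_inv:
  assumes ax: "prim_axis_half scale m x"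
  shows "tau x (tau x u) = u"
proof -
  obtain u1 u0 uh where d: "x \<cdot> u1 = u1" "x \<cdot> u0 = 0" "x \<cdot> uh = half uh" "u = u1 + u0 + uh"
    using ax unfolding ax_iff by blast
  have d': "x \<cdot> (- uh) = half (- uh)" using d(3) by (simp add: mlin)
  have "tau x u = u1 + u0 + (- uh)" using tau_dec[OF d(1-3)] d(4) by simp
  thus ?thesis using tau_dec[OF d(1,2) d'] d(4) by simp
qed

lemma eig_add:
  "x \<cdot> u = l *s u \<Longrightarrow> x \<cdot> v = l *s v \<Longrightarrow> x \<cdot> (u + v) = l *s (u + v)"
  by (simp add: mlin scale_right_distrib)

lemma tau_mult:
  assumes ax: "prim_axis_half scale m x"
  shows "tau x (u \<cdot> v) = tau x u \<cdot> tau x v"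
proof -
  obtain u1 u0 uh where d: "x \<cdot> u1 = u1" "x \<cdot> u0 = 0" "x \<cdot> uh = half uh" "u = u1 + u0 + uh"
    using ax_dec[OF ax] by blast
  obtain v1 v0 vh where e: "x \<cdot> v1 = v1" "x \<cdot> v0 = 0" "x \<cdot> vh = half vh" "v = v1 + v0 + vh"
    using ax_dec[OF ax] by blast
  obtain p1 p0 where p: "x \<cdot> p1 = p1" "x \<cdot> p0 = 0" "uh \<cdot> vh = p1 + p0"
    using ax_fhh[OF ax d(3) e(3)] by blast
  have z1: "u1 \<cdot> v0 = 0" using ax_f10[OF ax d(1) e(2)] .
  have z2: "u0 \<cdot> v1 = 0" using ax_f10[OF ax e(1) d(2)] comm[of u0 v1] by simp
  have w1: "x \<cdot> (u1 \<cdot> v1 + p1) = u1 \<cdot> v1 + p1"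
    using ax_f11[OF ax d(1) e(1)] p(1) by (simp add: mlin)
  have w0: "x \<cdot> (u0 \<cdot> v0 + p0) = 0"
    using ax_f00[OF ax d(2) e(2)] p(2) by (simp add: mlin)
  have h1: "x \<cdot> (u1 \<cdot> vh) = half (u1 \<cdot> vh)" using ax_f1h[OF ax d(1) e(3)] .
  have h2: "x \<cdot> (uh \<cdot> v1) = half (uh \<cdot> v1)" using ax_f1h[OF ax e(1) d(3)] comm[of uh v1] by simp
  have h3: "x \<cdot> (u0 \<cdot> vh) = half (u0 \<cdot> vh)" using ax_f0h[OF ax d(2) e(3)] .
  have h4: "x \<cdot> (uh \<cdot> v0) = half (uh \<cdot> v0)" using ax_f0h[OF ax e(2) d(3)] comm[of uh v0] by simp
  have wh: "x \<cdot> (u1 \<cdot> vh + uh \<cdot> v1 + u0 \<cdot> vh + uh \<cdot> v0) = half (u1 \<cdot> vh + uh \<cdot> v1 + u0 \<cdot> vh + uh \<cdot> v0)"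
    by (intro eig_add h1 h2 h3 h4)
  have uv: "u \<cdot> v = (u1 \<cdot> v1 + p1) + (u0 \<cdot> v0 + p0) + (u1 \<cdot> vh + uh \<cdot> v1 + u0 \<cdot> vh + uh \<cdot> v0)"
    unfolding d(4) e(4) by (simp only: mlin z1 z2 p(3) abel_simps)
  have "tau x (u \<cdot> v) = (u1 \<cdot> v1 + p1) + (u0 \<cdot> v0 + p0) - (u1 \<cdot> vh + uh \<cdot> v1 + u0 \<cdot> vh + uh \<cdot> v0)"
    unfolding uv by (rule tau_dec[OF w1 w0 wh])
  also have "\<dots> = (u1 + u0 - uh) \<cdot> (v1 + v0 - vh)"
    by (simp only: mlin z1 z2 p(3) abel_simps)
  also have "\<dots> = tau x u \<cdot> tau x v"
    using tau_dec[OF d(1-3)] tau_dec[OF e(1-3)] d(4) e(4) by simp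
  finally show ?thesis .
qed

lemma ax_transfer:
  assumes ax: "prim_axis_half scale m y"
    and inv: "\<And>u. s (s u) = u"
    and sadd: "\<And>u v. s (u + v) = s u + s v"
    and ssc: "\<And>c u. s (c *s u) = c *s s u"
    and smul: "\<And>u v. s (u \<cdot> v) = s u \<cdot> s v"
  shows "prim_axis_half scale m (s y)"
proof -
  have s0: "s 0 = 0" using sadd[of 0 0] by simp
  have sinj: "s u = s v \<longleftrightarrow> u = v" for u v using inv by metis
  have eig: "s y \<cdot> u = l *s u \<longleftrightarrow> y \<cdot> s u = l *s s u" for u l
  proof -
    have "s y \<cdot> u = s (y \<cdot> s u)" using smul[of y "s u"] inv by simp
    moreover have "l *s u = s (l *s s u)" using ssc inv by simp
    ultimately show ?thesis using sinj by simp
  qed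
  have e1: "s y \<cdot> u = u \<longleftrightarrow> y \<cdot> s u = s u" for u using eig[of u 1] by simp
  have e0: "s y \<cdot> u = 0 \<longleftrightarrow> y \<cdot> s u = 0" for u using eig[of u 0] by simp
  have eh: "s y \<cdot> u = half u \<longleftrightarrow> y \<cdot> s u = half (s u)" for u using eig[of u "1/2"] by simp
  have smul': "s (u \<cdot> v) = w \<longleftrightarrow> u \<cdot> v = s w" for u v w using inv by metis
  show ?thesis
  proof (rule axI)
    show "s y \<noteq> 0" using ax_ne[OF ax] s0 sinj by metis
    show "s y \<cdot> s y = s y" using ax_idem[OF ax] smul by metis
  next
    fix u
    obtain w1 w0 wh where w: "y \<cdot> w1 = w1" "y \<cdot> w0 = 0" "y \<cdot> wh = half wh" "s u = w1 + w0 + wh"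
      using ax_dec[OF ax] by blast
    have "u = s w1 + s w0 + s wh" using w(4) sadd inv by metis
    moreover have "s y \<cdot> s w1 = s w1" "s y \<cdot> s w0 = 0" "s y \<cdot> s wh = half (s wh)"
      using w(1-3) e1 e0 eh inv by simp_all
    ultimately show "\<exists>u1 u0 uh. s y \<cdot> u1 = u1 \<and> s y \<cdot> u0 = 0 \<and> s y \<cdot> uh = half uh \<and> u = u1 + u0 + uh"
      by blast
  next
    fix u assume "s y \<cdot> u = u"
    then obtain c where "s u = c *s y" using ax_a1[OF ax] e1 by blast
    hence "u = c *s s y" using inv ssc by metis
    thus "\<exists>c. u = c *s s y" by blast
  next
    fix u v assume "s y \<cdot> u = u" "s y \<cdot> v = v"
    thus "s y \<cdot> (u \<cdot> v) = u \<cdot> v" using ax_f11[OF ax] e1 smul by simp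
  next
    fix u v assume "s y \<cdot> u = u" "s y \<cdot> v = 0"
    hence "s (u \<cdot> v) = 0" using ax_f10[OF ax] e1 e0 smul by simp
    thus "u \<cdot> v = 0" using smul' s0 by simp
  next
    fix u v assume "s y \<cdot> u = 0" "s y \<cdot> v = 0"
    thus "s y \<cdot> (u \<cdot> v) = 0" using ax_f00[OF ax] e0 smul by simp
  next
    fix u v assume "s y \<cdot> u = u" "s y \<cdot> v = half v"
    thus "s y \<cdot> (u \<cdot> v) = half (u \<cdot> v)" using ax_f1h[OF ax] e1 eh smul by simp
  next
    fix u v assume "s y \<cdot> u = 0" "s y \<cdot> v = half v"
    thus "s y \<cdot> (u \<cdot> v) = half (u \<cdot> v)" using ax_f0h[OF ax] e0 eh smul by simp
  next
    fix u v assume "s y \<cdot> u = half u" "s y \<cdot> v = half v"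
    then obtain p1 p0 where p: "y \<cdot> p1 = p1" "y \<cdot> p0 = 0" "s u \<cdot> s v = p1 + p0"
      using ax_fhh[OF ax] eh by blast
    have "u \<cdot> v = s p1 + s p0" using p(3) smul sadd inv by metis
    moreover have "s y \<cdot> s p1 = s p1" "s y \<cdot> s p0 = 0" using p(1,2) e1 e0 inv by simp_all
    ultimately show "\<exists>w1 w0. s y \<cdot> w1 = w1 \<and> s y \<cdot> w0 = 0 \<and> u \<cdot> v = w1 + w0" by blast
  qed
qed

lemma ax_tau:
  assumes "prim_axis_half scale m x" "prim_axis_half scale m y"
  shows "prim_axis_half scale m (tau x y)"
  by (rule ax_transfer[OF assms(2)]) (use tau_inv tau_add tau_scale tau_mult assms(1) in auto)

end

locale jfrob = jalg +
  fixes f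
  assumes frob: "frobenius_form scale m f"
begin

lemma f_addL: "f (u + v) w = f u w + f v w" using frob unfolding frobenius_form_def by blast
lemma f_scL: "f (c *s u) w = c * f u w" using frob unfolding frobenius_form_def by blast
lemma f_addR: "f u (v + w) = f u v + f u w" using frob unfolding frobenius_form_def by blast
lemma f_scR: "f u (c *s w) = c * f u w" using frob unfolding frobenius_form_def by blast
lemma f_assoc: "f (u \<cdot> v) w = f u (v \<cdot> w)" using frob unfolding frobenius_form_def by blast
lemma f_ax: "prim_axis_half scale m x \<Longrightarrow> f x x = 1" using frob unfolding frobenius_form_def by blast
lemma f_zeroR[simp]: "f u 0 = 0" using f_scR[of u 0 0] by simp
lemma f_zeroL[simp]: "f 0 u = 0" using f_scL[of 0 0 u] by simp

lemma f_E0: "x \<cdot> x = x \<Longrightarrow> x \<cdot> w = 0 \<Longrightarrow> f x w = 0"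
  using f_assoc[of x x w] by simp
lemma f_Eh: assumes "x \<cdot> x = x" "x \<cdot> w = half w" shows "f x w = 0"
proof -
  have "f x w = f x (half w)" using f_assoc[of x x w] assms by simp
  also have "\<dots> = (1/2) * f x w" by (rule f_scR)
  finally show ?thesis by simp
qed

definition good where
  "good c \<longleftrightarrow> (\<forall>u. c \<cdot> P0 c u = 0) \<and> (\<forall>u. P1 c u = f c u *s c)
    \<and> (\<forall>u v. P1 c u \<cdot> P0 c v = 0) \<and> (\<forall>u v. c \<cdot> (P0 c u \<cdot> P0 c v) = 0)
    \<and> (\<forall>u v. 2 *s (c \<cdot> (P0 c u \<cdot> Ph c v)) - (P0 c u \<cdot> Ph c v) = 0)
    \<and> (\<forall>u v. Ph c (Ph c u \<cdot> Ph c v) = 0)"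

lemma ax_good:
  assumes ax: "prim_axis_half scale m x"
  shows "good x"
proof -
  note E = ax_P[OF ax]
  have xx: "x \<cdot> x = x" using ax_idem[OF ax] .
  have 2: "P1 x u = f x u *s x" for u
  proof -
    obtain c where c: "P1 x u = c *s x" using ax_a1[OF ax E(1)] by blast
    have "f x u = f x (P1 x u) + f x (P0 x u) + f x (Ph x u)"
      using P_sum[of x u] f_addR by metis
    also have "\<dots> = c" using c f_scR f_ax[OF ax] f_E0[OF xx E(2)] f_Eh[OF xx E(3)] by simp
    finally show ?thesis using c by simp
  qed
  have 3: "P1 x u \<cdot> P0 x v = 0" for u v using ax_f10[OF ax E(1) E(2)] .
  have 4: "x \<cdot> (P0 x u \<cdot> P0 x v) = 0" for u v using ax_f00[OF ax E(2) E(2)] .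
  have 5: "2 *s (x \<cdot> (P0 x u \<cdot> Ph x v)) - (P0 x u \<cdot> Ph x v) = 0" for u v
  proof -
    have "x \<cdot> (P0 x u \<cdot> Ph x v) = half (P0 x u \<cdot> Ph x v)" using ax_f0h[OF ax E(2) E(3)] .
    thus ?thesis by simp
  qed
  have 6: "Ph x (Ph x u \<cdot> Ph x v) = 0" for u v
  proof -
    obtain w1 w0 where w: "x \<cdot> w1 = w1" "x \<cdot> w0 = 0" "Ph x u \<cdot> Ph x v = w1 + w0"
      using ax_fhh[OF ax E(3) E(3)] by blast
    have "x \<cdot> (0::'b) = half 0" by simp
    from decomp_P(3)[OF w(1,2) this] w(3) show ?thesis by simp
  qed
  show ?thesis unfolding good_def using E(2) 2 3 4 5 6 by blast
qed

lemma good_ax: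
  assumes c0: "c \<noteq> 0" and cc: "c \<cdot> c = c" and g: "good c"
  shows "prim_axis_half scale m c"
proof -
  have g0: "c \<cdot> P0 c u = 0" for u using g unfolding good_def by blast
  have g2: "P1 c u = f c u *s c" for u using g unfolding good_def by blast
  have g3: "P1 c u \<cdot> P0 c v = 0" for u v using g unfolding good_def by blast
  have g4: "c \<cdot> (P0 c u \<cdot> P0 c v) = 0" for u v using g unfolding good_def by blast
  have g5: "2 *s (c \<cdot> (P0 c u \<cdot> Ph c v)) - (P0 c u \<cdot> Ph c v) = 0" for u v using g unfolding good_def by blast
  have g6: "Ph c (Ph c u \<cdot> Ph c v) = 0" for u v using g unfolding good_def by blast
  have e1: "c \<cdot> P1 c u = P1 c u" for u using P1_eig[of c u] g0 by simp
  have eh: "c \<cdot> Ph c u = half (Ph c u)" for u using Ph_eig[of c u] g0 by simp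
  have a1: "\<exists>d. u = d *s c" if "c \<cdot> u = u" for u
    using P_of_eig(1)[OF that] g2 by metis
  show ?thesis
  proof (rule axI[OF c0 cc])
    fix u show "\<exists>u1 u0 uh. c \<cdot> u1 = u1 \<and> c \<cdot> u0 = 0 \<and> c \<cdot> uh = half uh \<and> u = u1 + u0 + uh"
      using e1 g0 eh P_sum by metis
  next
    fix u assume "c \<cdot> u = u" thus "\<exists>d. u = d *s c" by (rule a1)
  next
    fix u v assume h: "c \<cdot> u = u" "c \<cdot> v = v"
    obtain d1 d2 where "u = d1 *s c" "v = d2 *s c" using a1 h by blast
    thus "c \<cdot> (u \<cdot> v) = u \<cdot> v" using cc by (simp add: mlin)
  next
    fix u v assume h: "c \<cdot> u = u" "c \<cdot> v = 0"
    show "u \<cdot> v = 0" using g3[of u v] P_of_eig(1)[OF h(1)] P_of_eig(5)[OF h(2)] by simp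
  next
    fix u v assume h: "c \<cdot> u = 0" "c \<cdot> v = 0"
    show "c \<cdot> (u \<cdot> v) = 0" using g4[of u v] P_of_eig(5)[OF h(1)] P_of_eig(5)[OF h(2)] by simp
  next
    fix u v assume h: "c \<cdot> u = u" "c \<cdot> v = half v"
    obtain d1 where "u = d1 *s c" using a1 h by blast
    thus "c \<cdot> (u \<cdot> v) = half (u \<cdot> v)" using h(2) by (simp add: mlin)
  next
    fix u v assume h: "c \<cdot> u = 0" "c \<cdot> v = half v"
    have "2 *s (c \<cdot> (u \<cdot> v)) - u \<cdot> v = 0"
      using g5[of u v] P_of_eig(5)[OF h(1)] P_of_eig(9)[OF h(2)] by simp
    hence "2 *s (c \<cdot> (u \<cdot> v)) = u \<cdot> v" by simp
    hence "(1/2) *s (2 *s (c \<cdot> (u \<cdot> v))) = half (u \<cdot> v)" by simp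
    thus "c \<cdot> (u \<cdot> v) = half (u \<cdot> v)" by simp
  next
    fix u v assume h: "c \<cdot> u = half u" "c \<cdot> v = half v"
    have "Ph c (u \<cdot> v) = 0" using g6[of u v] P_of_eig(9)[OF h(1)] P_of_eig(9)[OF h(2)] by simp
    thus "\<exists>w1 w0. c \<cdot> w1 = w1 \<and> c \<cdot> w0 = 0 \<and> u \<cdot> v = w1 + w0"
      using P_sum[of c "u \<cdot> v"] e1 g0 by (metis add.right_neutral)
  qed
qed

end



context jalg
begin

definition polyv where "polyv E \<longleftrightarrow> (\<exists>L. \<forall>t. E t = lp scale L t)"

lemma lp_scale: "c *s lp scale L t = lp scale (map (\<lambda>(i,v). (i, c *s v)) L) t"
  by (induction L) (auto simp: scale_right_distrib)

lemma lp_mult_single: "t^i *s (v \<cdot> lp scale L t) = lp scale (map (\<lambda>(j,w). (i+j, v \<cdot> w)) L) t"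
  by (induction L) (auto simp: mlin power_add scale_right_distrib mult.commute)

lemma lp_mult: "lp scale L1 t \<cdot> lp scale L2 t
   = lp scale (concat (map (\<lambda>(i,v). map (\<lambda>(j,w). (i+j, v \<cdot> w)) L2) L1)) t"
  by (induction L1) (auto simp: mlin lp_mult_single)

lemma polyv_const[intro]: "polyv (\<lambda>t. v)"
  unfolding polyv_def by (rule exI[of _ "[(0,v)]"]) simp

lemma polyv_add[intro]: "polyv E \<Longrightarrow> polyv F \<Longrightarrow> polyv (\<lambda>t. E t + F t)"
  unfolding polyv_def by (metis lp_append)

lemma polyv_scale[intro]: "polyv E \<Longrightarrow> polyv (\<lambda>t. c *s E t)"
  unfolding polyv_def by (metis lp_scale)

lemma polyv_diff[intro]: "polyv E \<Longrightarrow> polyv F \<Longrightarrow> polyv (\<lambda>t. E t - F t)"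
proof -
  assume "polyv E" "polyv F"
  hence "polyv (\<lambda>t. E t + (-1) *s F t)" by (intro polyv_add polyv_scale)
  thus ?thesis by simp
qed

lemma polyv_mult[intro]: "polyv E \<Longrightarrow> polyv F \<Longrightarrow> polyv (\<lambda>t. E t \<cdot> F t)"
  unfolding polyv_def by (metis lp_mult)

lemma polyv_P[intro]: "polyv E \<Longrightarrow> polyv F \<Longrightarrow> polyv (\<lambda>t. P1 (E t) (F t))"
  "polyv E \<Longrightarrow> polyv F \<Longrightarrow> polyv (\<lambda>t. P0 (E t) (F t))"
  "polyv E \<Longrightarrow> polyv F \<Longrightarrow> polyv (\<lambda>t. Ph (E t) (F t))"
  unfolding P1_def P0_def Ph_def by (intro polyv_add polyv_diff polyv_scale polyv_mult; assumption)+

lemma polyv_zero: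
  assumes "polyv E" "infinite {t. E t = 0}"
  shows "E s = 0"
proof -
  obtain L where L: "\<And>t. E t = lp scale L t" using assms(1) unfolding polyv_def by blast
  show ?thesis using lp_zero[of L s] assms(2) L by simp
qed

end

context jfrob
begin

lemma f_lp: "f (lp scale L t) u = lp (*) (map (\<lambda>(i,v). (i, f v u)) L) t"
  by (induction L) (auto simp: f_addL f_scL lp_def)

lemma lp_sc_single: "(t^i * g) *s lp scale L t = lp scale (map (\<lambda>(j,w). (i+j, g *s w)) L) t"
proof (induction L)
  case Nil
  then show ?case by simp
next
  case (Cons a L)
  obtain j w where a: "a = (j, w)" by force
  have e: "(t^i * g) *s (t^j *s w) = t^(i+j) *s (g *s w)"
    by (simp only: scale_scale power_add mult_ac)
  show ?case unfolding a by (simp only: lp_Cons list.map prod.case scale_right_distrib e Cons)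
qed

lemma lp_sc: "lp (*) G t *s lp scale L t
   = lp scale (concat (map (\<lambda>(i,g). map (\<lambda>(j,w). (i+j, g *s w)) L) G)) t"
proof (induction G)
  case Nil
  then show ?case by simp
next
  case (Cons a G)
  obtain i g where a: "a = (i, g)" by force
  show ?case unfolding a
    by (simp only: lp_Cons list.map prod.case scale_left_distrib lp_sc_single Cons concat.simps lp_append)
qed

lemma polyv_f[intro]: "polyv E \<Longrightarrow> polyv F \<Longrightarrow> polyv (\<lambda>t. f (E t) u *s F t)"
proof -
  assume "polyv E" "polyv F"
  then obtain L1 L2 where L: "\<And>t. E t = lp scale L1 t" "\<And>t. F t = lp scale L2 t"
    unfolding polyv_def by blast
  have "f (E t) u *s F t = lp scale (concat (map (\<lambda>(i,g). map (\<lambda>(j,w). (i+j, g *s w)) L2) (map (\<lambda>(i,v). (i, f v u)) L1))) t" for t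
    by (simp only: L f_lp lp_sc)
  thus ?thesis unfolding polyv_def by blast
qed

lemma goodD:
  assumes "good c"
  shows "c \<cdot> P0 c u = 0" "P1 c u - f c u *s c = 0" "P1 c u \<cdot> P0 c v = 0" "c \<cdot> (P0 c u \<cdot> P0 c v) = 0"
    "2 *s (c \<cdot> (P0 c u \<cdot> Ph c v)) - (P0 c u \<cdot> Ph c v) = 0" "Ph c (Ph c u \<cdot> Ph c v) = 0"
proof -
  note g = assms[unfolded good_def]
  note g1 = conjunct1[OF g]
  note g2 = conjunct1[OF conjunct2[OF g]]
  note g3 = conjunct1[OF conjunct2[OF conjunct2[OF g]]]
  note g4 = conjunct1[OF conjunct2[OF conjunct2[OF conjunct2[OF g]]]]
  note g5 = conjunct1[OF conjunct2[OF conjunct2[OF conjunct2[OF conjunct2[OF g]]]]]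
  note g6 = conjunct2[OF conjunct2[OF conjunct2[OF conjunct2[OF conjunct2[OF g]]]]]
  show "c \<cdot> P0 c u = 0" by (rule g1[rule_format])
  show "P1 c u - f c u *s c = 0" by (simp only: g2[rule_format] diff_self)
  show "P1 c u \<cdot> P0 c v = 0" by (rule g3[rule_format])
  show "c \<cdot> (P0 c u \<cdot> P0 c v) = 0" by (rule g4[rule_format])
  show "2 *s (c \<cdot> (P0 c u \<cdot> Ph c v)) - (P0 c u \<cdot> Ph c v) = 0" by (rule g5[rule_format])
  show "Ph c (Ph c u \<cdot> Ph c v) = 0" by (rule g6[rule_format])
qed

lemma poly_good:
  assumes pc: "polyv c" and inf: "infinite {t. prim_axis_half scale m (c t)}"
  shows "good (c s)"
proof -
  have G: "good (c t)" if "t \<in> {t. prim_axis_half scale m (c t)}" for t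
    using that ax_good by blast
  have Z: "E s = 0" if "polyv E" "\<And>t. good (c t) \<Longrightarrow> E t = 0" for E
  proof (rule polyv_zero[OF that(1)])
    have "{t. prim_axis_half scale m (c t)} \<subseteq> {t. E t = 0}" using G that(2) by blast
    thus "infinite {t. E t = 0}" using inf infinite_super by blast
  qed
  note I = polyv_add polyv_diff polyv_scale polyv_mult polyv_P polyv_f polyv_const pc
  have p1: "polyv (\<lambda>t. c t \<cdot> P0 (c t) u)" for u by (intro I)
  have p2: "polyv (\<lambda>t. P1 (c t) u - f (c t) u *s c t)" for u by (intro I)
  have p3: "polyv (\<lambda>t. P1 (c t) u \<cdot> P0 (c t) v)" for u v by (intro I)
  have p4: "polyv (\<lambda>t. c t \<cdot> (P0 (c t) u \<cdot> P0 (c t) v))" for u v by (intro I)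
  have p5: "polyv (\<lambda>t. 2 *s (c t \<cdot> (P0 (c t) u \<cdot> Ph (c t) v)) - (P0 (c t) u \<cdot> Ph (c t) v))" for u v by (intro I)
  have p6: "polyv (\<lambda>t. Ph (c t) (Ph (c t) u \<cdot> Ph (c t) v))" for u v by (intro I)
  have 1: "c s \<cdot> P0 (c s) u = 0" for u
    by (rule Z[OF p1]) (rule goodD(1))
  have 2: "P1 (c s) u = f (c s) u *s c s" for u
  proof -
    have "P1 (c s) u - f (c s) u *s c s = 0" by (rule Z[OF p2]) (rule goodD(2))
    thus ?thesis by simp
  qed
  have 3: "P1 (c s) u \<cdot> P0 (c s) v = 0" for u v by (rule Z[OF p3]) (rule goodD(3))
  have 4: "c s \<cdot> (P0 (c s) u \<cdot> P0 (c s) v) = 0" for u v by (rule Z[OF p4]) (rule goodD(4))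
  have 5: "2 *s (c s \<cdot> (P0 (c s) u \<cdot> Ph (c s) v)) - (P0 (c s) u \<cdot> Ph (c s) v) = 0" for u v
    by (rule Z[OF p5]) (rule goodD(5))
  have 6: "Ph (c s) (Ph (c s) u \<cdot> Ph (c s) v) = 0" for u v by (rule Z[OF p6]) (rule goodD(6))
  have h5: "2 *s (c s \<cdot> (P0 (c s) u \<cdot> Ph (c s) v)) = (P0 (c s) u \<cdot> Ph (c s) v)" for u v
    using 5[of u v] by simp
  show ?thesis unfolding good_def
    by (intro conjI allI 1 2 3 4 6 5)
qed

end



context jalg
begin

lemma lc3_nest: "lc3 (lc3 u v w p1 p2 p3) (lc3 u v w q1 q2 q3) (lc3 u v w r1 r2 r3) x y z
  = lc3 u v w (x*p1 + y*q1 + z*r1) (x*p2 + y*q2 + z*r2) (x*p3 + y*q3 + z*r3)"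
  by (simp only: lc3_def[of "lc3 u v w p1 p2 p3"] lc3_scale lc3_add)

lemma lc3_cdotL: "lc3 u v w x y z \<cdot> W = lc3 (u \<cdot> W) (v \<cdot> W) (w \<cdot> W) x y z"
  by (simp add: lc3_def mlin)

lemma decomp_unique:
  assumes "x \<cdot> u1 = u1" "x \<cdot> u0 = 0" "x \<cdot> uh = half uh"
    "x \<cdot> v1 = v1" "x \<cdot> v0 = 0" "x \<cdot> vh = half vh"
    "u1 + u0 + uh = v1 + v0 + vh"
  shows "u1 = v1" "u0 = v0" "uh = vh"
  using decomp_P[OF assms(1-3)] decomp_P[OF assms(4-6)] assms(7) by metis+

lemma tau_alt: "tau x u = u - 8 *s (x \<cdot> u) + 8 *s (x \<cdot> (x \<cdot> u))"
proof -
  have a: "P1 x u = lc3 (x \<cdot> (x \<cdot> u)) (x \<cdot> u) u 2 (-1) 0"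
    "P0 x u = lc3 (x \<cdot> (x \<cdot> u)) (x \<cdot> u) u 2 (-3) 1"
    "Ph x u = lc3 (x \<cdot> (x \<cdot> u)) (x \<cdot> u) u (-4) 4 0"
    "u - 8 *s (x \<cdot> u) + 8 *s (x \<cdot> (x \<cdot> u)) = lc3 (x \<cdot> (x \<cdot> u)) (x \<cdot> u) u 8 (-8) 1"
    by (simp_all add: P1_def P0_def Ph_def lc3_def)
  show ?thesis unfolding tau_def a(1-3) a(4) by simp
qed


definition lc4 :: "'v \<Rightarrow> 'v \<Rightarrow> 'v \<Rightarrow> 'v \<Rightarrow> 'a \<Rightarrow> 'a \<Rightarrow> 'a \<Rightarrow> 'a \<Rightarrow> 'v" where
  "lc4 u v w z a b c d = a *s u + b *s v + c *s w + d *s z"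

lemma lc4_add[simp]: "lc4 u v w z a b c d + lc4 u v w z a' b' c' d' = lc4 u v w z (a+a') (b+b') (c+c') (d+d')"
  by (simp add: lc4_def scale_left_distrib add_ac)
lemma lc4_neg[simp]: "- lc4 u v w z a b c d = lc4 u v w z (-a) (-b) (-c) (-d)"
  by (simp add: lc4_def scale_minus_left add_ac)
lemma lc4_diff[simp]: "lc4 u v w z a b c d - lc4 u v w z a' b' c' d' = lc4 u v w z (a-a') (b-b') (c-c') (d-d')"
proof -
  have "lc4 u v w z a b c d - lc4 u v w z a' b' c' d' = lc4 u v w z a b c d + (- lc4 u v w z a' b' c' d')"
    by (simp only: diff_conv_add_uminus)
  also have "\<dots> = lc4 u v w z (a-a') (b-b') (c-c') (d-d')" by (simp only: lc4_neg lc4_add diff_conv_add_uminus)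
  finally show ?thesis .
qed
lemma lc4_scale[simp]: "e *s lc4 u v w z a b c d = lc4 u v w z (e*a) (e*b) (e*c) (e*d)"
  by (simp add: lc4_def scale_right_distrib)

lemma lc3_nest4: "lc3 (lc4 u v w z p1 p2 p3 p4) (lc4 u v w z q1 q2 q3 q4) (lc4 u v w z r1 r2 r3 r4) x y t
  = lc4 u v w z (x*p1 + y*q1 + t*r1) (x*p2 + y*q2 + t*r2) (x*p3 + y*q3 + t*r3) (x*p4 + y*q4 + t*r4)"
  by (simp only: lc3_def[of "lc4 u v w z p1 p2 p3 p4"] lc4_scale lc4_add)

lemma lc3_nest0: "lc3 (lc3 u v w p1 p2 p3) Q (lc3 u v w r1 r2 r3) x 0 z
  = lc3 u v w (x*p1 + z*r1) (x*p2 + z*r2) (x*p3 + z*r3)"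
  by (simp add: lc3_def[of "lc3 u v w p1 p2 p3"] lc3_def[of Q] del: lc3_add) (simp add: lc3_def algebra_simps scale_left_distrib)

lemma P_lc3:
  assumes "x \<cdot> u1 = u1" "x \<cdot> u0 = 0" "x \<cdot> uh = half uh"
  shows "P1 x (lc3 u1 u0 uh p q r) = p *s u1" "P0 x (lc3 u1 u0 uh p q r) = q *s u0"
    "Ph x (lc3 u1 u0 uh p q r) = r *s uh"
proof -
  have e: "x \<cdot> (p *s u1) = p *s u1" "x \<cdot> (q *s u0) = 0" "x \<cdot> (r *s uh) = half (r *s uh)"
    using assms by (simp_all add: scR scale_scale mult.commute)
  show "P1 x (lc3 u1 u0 uh p q r) = p *s u1" "P0 x (lc3 u1 u0 uh p q r) = q *s u0"
    "Ph x (lc3 u1 u0 uh p q r) = r *s uh"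
    unfolding lc3_def using decomp_P[OF e] by simp_all
qed

lemma P_lc3_lin:
  "P1 x (lc3 u v w p q r) = lc3 (P1 x u) (P1 x v) (P1 x w) p q r"
  "P0 x (lc3 u v w p q r) = lc3 (P0 x u) (P0 x v) (P0 x w) p q r"
  "Ph x (lc3 u v w p q r) = lc3 (Ph x u) (Ph x v) (Ph x w) p q r"
  by (simp_all add: lc3_def P_lin)

lemma P_zero[simp]: "P1 x 0 = 0" "P0 x 0 = 0" "Ph x 0 = 0"
  by (simp_all add: P1_def P0_def Ph_def)

end

context jfrob
begin

lemma P1_f: "prim_axis_half scale m x \<Longrightarrow> P1 x u = f x u *s x"
  using goodD(2)[OF ax_good] by simp

lemma ax_xxy:
  assumes ax: "prim_axis_half scale m x"
  shows "x \<cdot> (x \<cdot> y) = half (x \<cdot> y) + (f x y / 2) *s x"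
proof -
  note E = ax_P[OF ax]
  define y0 where "y0 = P0 x y"
  define yh where "yh = Ph x y"
  define p where "p = f x y"
  have e: "x \<cdot> x = x" "x \<cdot> y0 = 0" "x \<cdot> yh = half yh"
    using ax_idem[OF ax] E by (auto simp: y0_def yh_def)
  have y: "y = lc3 x y0 yh p 1 1"
    using P_sum[of x y] P1_f[OF ax, of y] by (simp add: lc3_def y0_def yh_def p_def)
  have xy: "x \<cdot> y = lc3 x y0 yh p 0 (1/2)"
    by (subst y, simp only: eig_lc3[OF e])
  have xxy: "x \<cdot> (x \<cdot> y) = lc3 x y0 yh p 0 (1/4)"
    unfolding xy by (simp only: eig_lc3[OF e]) simp
  have px: "(p / 2) *s x = lc3 x y0 yh (p/2) 0 0" by (simp add: lc3_def)
  show ?thesis unfolding xxy unfolding xy p_def[symmetric] px by simp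
qed

lemma f_sym:
  assumes "prim_axis_half scale m x" "prim_axis_half scale m y"
  shows "f x y = f y x"
proof -
  have "f x y = f (x \<cdot> y) y" using f_assoc[of x y y] ax_idem[OF assms(2)] by simp
  also have "\<dots> = f y (y \<cdot> x)" using f_assoc[of y x y] comm[of x y] comm[of x y] by simp
  also have "\<dots> = f y x" using f_assoc[of y y x] ax_idem[OF assms(2)] by simp
  finally show ?thesis .
qed


lemma lc4_cong: "a = a' \<Longrightarrow> b = b' \<Longrightarrow> c = c' \<Longrightarrow> d = d' \<Longrightarrow> lc4 u v w z a b c d = lc4 u v w z a' b' c' d'"
  by simp
lemma lc4_congv: "u = u' \<Longrightarrow> v = v' \<Longrightarrow> w = w' \<Longrightarrow> z = z' \<Longrightarrow> lc4 u v w z a b c d = lc4 u' v' w' z' a b c d"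
  by simp
lemma lc4_nest3_0: "lc4 (lc3 u v w p1 p2 p3) (lc3 u v w q1 q2 q3) (lc3 u v w r1 r2 r3) Z x y t 0
  = lc3 u v w (x*p1 + y*q1 + t*r1) (x*p2 + y*q2 + t*r2) (x*p3 + y*q3 + t*r3)"
proof -
  have "lc4 (lc3 u v w p1 p2 p3) (lc3 u v w q1 q2 q3) (lc3 u v w r1 r2 r3) Z x y t 0
    = lc3 (lc3 u v w p1 p2 p3) (lc3 u v w q1 q2 q3) (lc3 u v w r1 r2 r3) x y t"
    by (simp add: lc4_def lc3_def[of "lc3 u v w p1 p2 p3"] del: lc3_add lc3_scale)
  thus ?thesis by (simp only: lc3_nest)
qed

lemma lc3_congv: "u = u' \<Longrightarrow> v = v' \<Longrightarrow> w = w' \<Longrightarrow> lc3 u v w x y z = lc3 u' v' w' x y z"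
  by simp

end

locale twoax = jfrob +
  fixes a b
  assumes axa: "prim_axis_half scale m a" and axb: "prim_axis_half scale m b"
begin

abbreviation "n \<equiv> a \<cdot> b"
abbreviation "\<phi> \<equiv> f a b"

lemma aa: "a \<cdot> a = a" by (rule ax_idem[OF axa])
lemma bb: "b \<cdot> b = b" by (rule ax_idem[OF axb])
lemma ba: "b \<cdot> a = n" by (rule comm)
lemma fba: "f b a = \<phi>" using f_sym[OF axa axb] by simp

lemma an: "a \<cdot> n = lc3 a b n (\<phi>/2) 0 (1/2)"
  using ax_xxy[OF axa, of b] by (simp add: lc3_def add.commute)
lemma bn: "b \<cdot> n = lc3 a b n 0 (\<phi>/2) (1/2)"
  using ax_xxy[OF axb, of a] fba comm[of b a] by (simp add: lc3_def add.commute)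
lemma na: "n \<cdot> a = lc3 a b n (\<phi>/2) 0 (1/2)" using an comm[of n a] by simp
lemma nb: "n \<cdot> b = lc3 a b n 0 (\<phi>/2) (1/2)" using bn comm[of n b] by simp

lemma nn: "n \<cdot> n = lc3 a b n (\<phi>/4) (\<phi>/4) (\<phi>/2)"
proof -
  define b0 where "b0 = P0 a b"
  define bh where "bh = Ph a b"
  define w0 where "w0 = P0 a (bh \<cdot> bh)"
  define w1 where "w1 = P1 a (bh \<cdot> bh)"
  define X where "X = n \<cdot> n"
  define p where "p = \<phi>"
  have e: "a \<cdot> a = a" "a \<cdot> b0 = 0" "a \<cdot> bh = half bh"
    using aa ax_P[OF axa, of b] by (auto simp: b0_def bh_def)
  have B: "b = lc3 a b0 bh p 1 1"
    using P_sum[of a b] P1_f[OF axa, of b] by (simp add: lc3_def b0_def bh_def p_def)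
  have AB: "n = lc3 a b0 bh p 0 (1/2)"
  proof -
    have "n = a \<cdot> lc3 a b0 bh p 1 1" using B by (rule arg_cong)
    thus ?thesis by (simp only: eig_lc3[OF e])
  qed
  have b0b0: "a \<cdot> (b0 \<cdot> b0) = 0" using ax_f00[OF axa e(2) e(2)] .
  have b0bh: "a \<cdot> (b0 \<cdot> bh) = half (b0 \<cdot> bh)" using ax_f0h[OF axa e(2) e(3)] .
  have bhbh: "bh \<cdot> bh = w1 + w0"
  proof -
    obtain q1 q0 where q: "a \<cdot> q1 = q1" "a \<cdot> q0 = 0" "bh \<cdot> bh = q1 + q0"
      using ax_fhh[OF axa e(3) e(3)] by blast
    have "a \<cdot> (0::'b) = half 0" by simp
    from decomp_P[OF q(1,2) this] q(3) show ?thesis by (simp add: w0_def w1_def)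
  qed
  have w0e: "a \<cdot> w0 = 0" unfolding w0_def by (rule ax_P[OF axa])
  have bb_exp: "b \<cdot> b = lc3 (lc3 a b0 bh p 0 (1/2)) (lc3 (b0 \<cdot> a) (b0 \<cdot> b0) (b0 \<cdot> bh) p 1 1)
                     (lc3 (bh \<cdot> a) (bh \<cdot> b0) (bh \<cdot> bh) p 1 1) p 1 1"
  proof -
    have "b \<cdot> b = lc3 a b0 bh p 1 1 \<cdot> lc3 a b0 bh p 1 1" using B by simp
    also have "\<dots> = lc3 (a \<cdot> lc3 a b0 bh p 1 1) (b0 \<cdot> lc3 a b0 bh p 1 1) (bh \<cdot> lc3 a b0 bh p 1 1) p 1 1"
      by (rule lc3_cdotL)
    also have "\<dots> = lc3 (lc3 a b0 bh p 0 (1/2)) (lc3 (b0 \<cdot> a) (b0 \<cdot> b0) (b0 \<cdot> bh) p 1 1)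
                     (lc3 (bh \<cdot> a) (bh \<cdot> b0) (bh \<cdot> bh) p 1 1) p 1 1"
      by (simp only: eig_lc3[OF e]) (simp only: lc3_cdot)
    finally show ?thesis .
  qed
  have b0a: "b0 \<cdot> a = 0" using e(2) comm[of b0 a] by simp
  have bha: "bh \<cdot> a = half bh" using e(3) comm[of bh a] by simp
  have bhb0: "bh \<cdot> b0 = b0 \<cdot> bh" by (rule comm)
  have Pbh: "P0 a bh = 0" "P1 a bh = 0" using P_of_eig(7,8)[OF e(3)] by simp_all
  have Pa: "P0 a a = 0" "P1 a a = a" using P_of_eig(1,2)[OF e(1)] by simp_all
  have Q0: "b0 = b0 \<cdot> b0 + w0"
  proof -
    have "P0 a (b \<cdot> b) = b0 \<cdot> b0 + w0"
      unfolding bb_exp P_lc3_lin P_lc3[OF e]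
      by (simp add: b0a bha bhb0 P_lin Pbh Pa P_of_eig(5)[OF b0b0] P_of_eig(8)[OF b0bh] w0_def[symmetric] lc3_def)
    thus ?thesis using bb by (simp add: b0_def)
  qed
  have Q1: "p *s a = (p * p) *s a + w1"
  proof -
    have "P1 a (b \<cdot> b) = (p * p) *s a + w1"
      unfolding bb_exp P_lc3_lin P_lc3[OF e]
      by (simp add: b0a bha bhb0 P_lin Pbh Pa P_of_eig(4)[OF b0b0] P_of_eig(7)[OF b0bh] w1_def[symmetric] lc3_def)
    thus ?thesis using bb P1_f[OF axa, of b] by (simp add: p_def)
  qed
  define nn where "nn = a \<cdot> b"
  define X where "X = nn \<cdot> nn"
  have A1: "a = lc3 a b0 bh 1 0 0" by (simp add: lc3_def)
  have AB': "nn = lc3 a b0 bh p 0 (1/2)" using AB by (simp add: nn_def)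
  have bh_eq: "bh = lc4 a b nn X (-2*p) 0 2 0"
  proof -
    have "lc4 a b nn X (-2*p) 0 2 0 = lc4 (lc3 a b0 bh 1 0 0) (lc3 a b0 bh p 1 1) (lc3 a b0 bh p 0 (1/2)) X (-2*p) 0 2 0"
      by (rule lc4_congv[OF A1 B AB' refl])
    also have "\<dots> = lc3 a b0 bh 0 0 1" by (simp only: lc4_nest3_0) simp
    finally show ?thesis by (simp add: lc3_def)
  qed
  have b0_eq: "b0 = lc4 a b nn X p 1 (-2) 0"
  proof -
    have "lc4 a b nn X p 1 (-2) 0 = lc4 (lc3 a b0 bh 1 0 0) (lc3 a b0 bh p 1 1) (lc3 a b0 bh p 0 (1/2)) X p 1 (-2) 0"
      by (rule lc4_congv[OF A1 B AB' refl])
    also have "\<dots> = lc3 a b0 bh 0 1 0" by (simp only: lc4_nest3_0) simp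
    finally show ?thesis by (simp add: lc3_def)
  qed
  have b0_3: "b0 = lc3 a b nn p 1 (-2)" using b0_eq by (simp add: lc3_def lc4_def)
  have T: "a \<cdot> a = lc4 a b nn X 1 0 0 0" "a \<cdot> b = lc4 a b nn X 0 0 1 0"
    "a \<cdot> nn = lc4 a b nn X (p/2) 0 (1/2) 0" "b \<cdot> a = lc4 a b nn X 0 0 1 0"
    "b \<cdot> b = lc4 a b nn X 0 1 0 0" "b \<cdot> nn = lc4 a b nn X 0 (p/2) (1/2) 0"
    "nn \<cdot> a = lc4 a b nn X (p/2) 0 (1/2) 0" "nn \<cdot> b = lc4 a b nn X 0 (p/2) (1/2) 0"
    "nn \<cdot> nn = lc4 a b nn X 0 0 0 1"
    using aa bb ba an[folded nn_def] bn[folded nn_def] na[folded nn_def] nb[folded nn_def]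
    by (simp_all add: lc4_def lc3_def nn_def X_def p_def)
  have b0sq: "b0 \<cdot> b0 = lc4 a b nn X (-(p*p)) (1 - 2*p) (-2) 4"
    unfolding b0_3
    apply (simp only: lc3_cdotL lc3_cdot T lc3_nest4)
    apply (rule lc4_cong)
       apply (simp_all add: field_simps)
    done
  have w0_eq: "w0 = lc4 a b nn X (p + p*p) (2*p) 0 (-4)"
  proof -
    have "w0 = b0 - b0 \<cdot> b0" using Q0 by (simp add: algebra_simps)
    also have "\<dots> = lc4 a b nn X (p + p*p) (2*p) 0 (-4)"
      unfolding b0sq by (subst b0_eq) (simp add: algebra_simps)
    finally show ?thesis .
  qed
  have w1_eq: "w1 = (p - p*p) *s a" using Q1 by (simp add: scale_left_diff_distrib algebra_simps)
  have nn3: "nn = lc3 a w0 bh p 0 (1/2)" using AB' by (simp add: lc3_def)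
  have e': "a \<cdot> a = a" "a \<cdot> w0 = 0" "a \<cdot> bh = half bh" using e w0e by auto
  have ann: "a \<cdot> nn = lc3 a w0 bh p 0 (1/4)"
    by (subst nn3, simp only: eig_lc3[OF e']) simp
  have bhnn: "bh \<cdot> nn = lc3 a w0 bh ((p - p*p)/2) (1/2) (p/2)"
  proof -
    have x1: "bh \<cdot> a = lc3 a w0 bh 0 0 (1/2)" using bha by (simp add: lc3_def)
    have x2: "bh \<cdot> bh = lc3 a w0 bh (p - p*p) 1 0" using bhbh w1_eq by (simp add: lc3_def)
    show ?thesis
      by (subst nn3, simp only: lc3_cdot x1 x2 lc3_nest0) simp
  qed
  have Xw: "X = lc3 a w0 bh (p*p + (p - p*p)/4) (1/4) (p/2)"
  proof -
    have "X = nn \<cdot> lc3 a w0 bh p 0 (1/2)" unfolding X_def by (subst (2) nn3) (rule refl)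
    also have "\<dots> = lc3 (nn \<cdot> a) (nn \<cdot> w0) (nn \<cdot> bh) p 0 (1/2)" by (rule lc3_cdot)
    also have "\<dots> = lc3 (lc3 a w0 bh p 0 (1/4)) (nn \<cdot> w0) (lc3 a w0 bh ((p - p*p)/2) (1/2) (p/2)) p 0 (1/2)"
      using ann bhnn comm[of nn a] comm[of nn bh] by simp
    also have "\<dots> = lc3 a w0 bh (p*p + (p - p*p)/4) (1/4) (p/2)"
      by (simp only: lc3_nest0) (rule lc3_cong; simp add: field_simps)
    finally show ?thesis .
  qed
  have X4: "X = lc4 a b nn X (p/2) (p/2) p (-1)"
  proof -
    have a4: "a = lc4 a b nn X 1 0 0 0" by (simp add: lc4_def)
    have "X = lc3 (lc4 a b nn X 1 0 0 0) (lc4 a b nn X (p + p*p) (2*p) 0 (-4)) (lc4 a b nn X (-2*p) 0 2 0)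
       (p*p + (p - p*p)/4) (1/4) (p/2)"
      using Xw lc3_congv[OF a4 w0_eq bh_eq] by (rule trans)
    also have "\<dots> = lc4 a b nn X (p/2) (p/2) p (-1)"
      by (simp only: lc3_nest4) (rule lc4_cong; simp add: field_simps)
    finally show ?thesis .
  qed
  have "X + X = lc4 a b nn X (p/2) (p/2) p 0"
  proof -
    have "X + X = lc4 a b nn X (p/2) (p/2) p (-1) + lc4 a b nn X 0 0 0 1"
      by (subst (1) X4) (simp add: lc4_def)
    thus ?thesis by simp
  qed
  hence "(1/2) *s (X + X) = lc4 a b nn X (p/4) (p/4) (p/2) 0" by simp
  moreover have "(1/2) *s (X + X) = X"
  proof -
    have "(1/2) *s (X + X) = (1/2) *s X + (1/2) *s X" by (rule scale_right_distrib)
    also have "\<dots> = (1/2 + 1/2) *s X" by (rule scale_left_distrib[symmetric])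
    finally show ?thesis by simp
  qed
  ultimately have "X = lc4 a b nn X (p/4) (p/4) (p/2) 0" by simp
  thus ?thesis by (simp add: lc4_def lc3_def X_def nn_def p_def)
qed


lemma mulJ: "lc3 a b n x1 y1 z1 \<cdot> lc3 a b n x2 y2 z2 = lc3 a b n
   (x1*x2 + (x1*z2 + z1*x2)*\<phi>/2 + z1*z2*\<phi>/4)
   (y1*y2 + (y1*z2 + z1*y2)*\<phi>/2 + z1*z2*\<phi>/4)
   (x1*y2 + y1*x2 + (x1*z2 + z1*x2)/2 + (y1*z2 + z1*y2)/2 + z1*z2*\<phi>/2)"
proof -
  define nn where "nn = a \<cdot> b"
  define p where "p = \<phi>"
  have T: "a \<cdot> a = lc3 a b nn 1 0 0" "a \<cdot> b = lc3 a b nn 0 0 1"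
    "a \<cdot> nn = lc3 a b nn (p/2) 0 (1/2)" "b \<cdot> a = lc3 a b nn 0 0 1"
    "b \<cdot> b = lc3 a b nn 0 1 0" "b \<cdot> nn = lc3 a b nn 0 (p/2) (1/2)"
    "nn \<cdot> a = lc3 a b nn (p/2) 0 (1/2)" "nn \<cdot> b = lc3 a b nn 0 (p/2) (1/2)"
    "nn \<cdot> nn = lc3 a b nn (p/4) (p/4) (p/2)"
    using aa bb ba an[folded nn_def] bn[folded nn_def] na[folded nn_def] nb[folded nn_def] nn[folded nn_def]
    by (simp_all add: lc3_def nn_def p_def)
  show ?thesis
    unfolding nn_def[symmetric] p_def[symmetric]
    apply (simp only: lc3_cdotL lc3_cdot T lc3_nest)
    apply (rule lc3_cong)
      apply (simp_all add: field_simps)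
    done
qed


lemma a_lc: "a = lc3 a b n 1 0 0" and b_lc: "b = lc3 a b n 0 1 0"
  by (simp_all add: lc3_def)

lemma J_sub:
  assumes "u \<in> gen_subalg scale m {a, b}"
  shows "\<exists>x y z. u = lc3 a b n x y z"
proof -
  define S where "S = {lc3 a b n x y z |x y z. True}"
  have sub: "subspace S"
    unfolding subspace_def S_def
  proof (intro conjI ballI allI)
    show "0 \<in> {lc3 a b n x y z |x y z. True}" by (rule CollectI, rule exI[of _ 0], rule exI[of _ 0], rule exI[of _ 0]) (simp add: lc3_def)
  next
    fix u v assume "u \<in> {lc3 a b n x y z |x y z. True}" "v \<in> {lc3 a b n x y z |x y z. True}"
    then obtain x y z x' y' z' where "u = lc3 a b n x y z" "v = lc3 a b n x' y' z'" by blast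
    thus "u + v \<in> {lc3 a b n x y z |x y z. True}" by simp blast
  next
    fix c u assume "u \<in> {lc3 a b n x y z |x y z. True}"
    then obtain x y z where "u = lc3 a b n x y z" by blast
    thus "c *s u \<in> {lc3 a b n x y z |x y z. True}" by simp blast
  qed
  have cl: "\<forall>u\<in>S. \<forall>v\<in>S. u \<cdot> v \<in> S"
  proof (intro ballI)
    fix u v assume "u \<in> S" "v \<in> S"
    then obtain x y z x' y' z' where "u = lc3 a b n x y z" "v = lc3 a b n x' y' z'" unfolding S_def by blast
    thus "u \<cdot> v \<in> S" unfolding S_def by (simp only: mulJ) blast
  qed
  have ab: "{a, b} \<subseteq> S" unfolding S_def using a_lc b_lc by blast
  have "gen_subalg scale m {a, b} \<subseteq> S"
    unfolding gen_subalg_def using sub cl ab by (intro Inter_lower) blast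
  thus ?thesis using assms unfolding S_def by blast
qed

lemma polyv_t[intro]: "polyv E \<Longrightarrow> polyv (\<lambda>t. t *s E t)"
proof -
  assume "polyv E"
  then obtain L where L: "\<And>t. E t = lp scale L t" unfolding polyv_def by blast
  have "t *s E t = lp scale (map (\<lambda>(i,v). (Suc i, v)) L) t" for t
    unfolding L by (induction L) (auto simp: scale_right_distrib)
  thus ?thesis unfolding polyv_def by blast
qed

lemma orbit_axis:
  assumes pc: "polyv c" and idem: "\<And>t. c t \<cdot> c t = c t" and ne: "\<And>t. c t \<noteq> 0"
    and c0: "c 0 = a"
    and step: "\<And>t. c (t + 4) = g (c t)" and gax: "\<And>y. prim_axis_half scale m y \<Longrightarrow> prim_axis_half scale m (g y)"
  shows "prim_axis_half scale m (c s)"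
proof -
  have k: "prim_axis_half scale m (c (4 * of_nat k))" for k
  proof (induction k)
    case 0
    then show ?case using c0 axa by simp
  next
    case (Suc k)
    have "c (4 * of_nat (Suc k)) = g (c (4 * of_nat k))"
      using step[of "4 * of_nat k"] by (simp add: algebra_simps)
    then show ?case using gax Suc by simp
  qed
  have inj: "inj (\<lambda>k::nat. (4 * of_nat k :: 'a))" by (auto simp: inj_def)
  have "infinite (range (\<lambda>k::nat. (4 * of_nat k :: 'a)))"
    using finite_imageD[OF _ inj] infinite_UNIV_nat by blast
  moreover have "range (\<lambda>k::nat. (4 * of_nat k :: 'a)) \<subseteq> {t. prim_axis_half scale m (c t)}"
    using k by blast
  ultimately have "infinite {t. prim_axis_half scale m (c t)}" using infinite_super by blast
  hence "good (c s)" by (rule poly_good[OF pc])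
  thus ?thesis by (rule good_ax[OF ne idem])
qed


lemma ax_tau2: "prim_axis_half scale m y \<Longrightarrow> prim_axis_half scale m (tau a (tau b y))"
  "prim_axis_half scale m y \<Longrightarrow> prim_axis_half scale m (tau b (tau a y))"
  using ax_tau[OF axa] ax_tau[OF axb] by blast+

lemma ne_dec:
  assumes "a \<cdot> u0 = 0" "a \<cdot> uh = half uh"
  shows "a + u0 + uh \<noteq> 0"
proof
  assume h: "a + u0 + uh = 0"
  have "P1 a (a + u0 + uh) = a" by (rule decomp_P(1)[OF aa assms])
  thus False using h ax_ne[OF axa] by simp
qed

lemma phi0_axis:
  assumes p0: "\<phi> = 0"
  shows "prim_axis_half scale m (lc3 a b n 1 0 s)"
proof (rule orbit_axis[where c="\<lambda>t. lc3 a b n 1 0 t" and g="\<lambda>y. tau a (tau b y)"])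
  have "(\<lambda>t. lc3 a b n 1 0 t) = (\<lambda>t. a + t *s n)" by (simp add: lc3_def)
  moreover have "polyv (\<lambda>t. a + t *s n)" by (intro polyv_add polyv_const polyv_t)
  ultimately show "polyv (\<lambda>t. lc3 a b n 1 0 t)" by simp
next
  fix t
  show "lc3 a b n 1 0 t \<cdot> lc3 a b n 1 0 t = lc3 a b n 1 0 t"
    apply (simp only: mulJ p0)
    apply (rule lc3_cong)
      apply (simp_all add: field_simps)
    done
next
  fix t
  have an0: "a \<cdot> (t *s n) = half (t *s n)"
    using an p0 by (simp add: lc3_def scR scale_scale mult.commute)
  have "a + 0 + t *s n \<noteq> 0" by (rule ne_dec) (simp_all add: an0)
  thus "lc3 a b n 1 0 t \<noteq> 0" by (simp add: lc3_def)
next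
  show "lc3 a b n 1 0 0 = a" by (simp add: lc3_def)
next
  fix t
  have "tau a (tau b (lc3 a b n 1 0 t)) = tau (lc3 a b n 1 0 0) (tau (lc3 a b n 0 1 0) (lc3 a b n 1 0 t))"
    by (simp add: lc3_def)
  also have "\<dots> = lc3 a b n 1 0 (t + 4)"
    apply (simp only: tau_alt mulJ lc3_scale lc3_diff lc3_add p0)
    apply (rule lc3_cong)
      apply (simp_all add: field_simps)
    done
  finally show "lc3 a b n 1 0 (t + 4) = tau a (tau b (lc3 a b n 1 0 t))" by simp
next
  fix y assume "prim_axis_half scale m y"
  thus "prim_axis_half scale m (tau a (tau b y))" by (rule ax_tau2(1))
qed


abbreviation "cc1 t \<equiv> lc3 a b n (1 - t + t*t/4) (t*t/4) (t - t*t/2)"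

lemma phi1_axis:
  assumes p1: "\<phi> = 1"
  shows "prim_axis_half scale m (cc1 s)"
proof (rule orbit_axis[where c="\<lambda>t. cc1 t" and g="\<lambda>y. tau b (tau a y)"])
  have e: "cc1 t = lc3 a b n 1 0 0 + t *s lc3 a b n (-1) 0 1 + t *s (t *s lc3 a b n (1/4) (1/4) (-1/2))" for t
    apply (simp only: lc3_scale lc3_add)
    apply (rule lc3_cong)
      apply (simp_all add: field_simps)
    done
  have "polyv (\<lambda>t. lc3 a b n 1 0 0 + t *s lc3 a b n (-1) 0 1 + t *s (t *s lc3 a b n (1/4) (1/4) (-1/2)))"
    by (intro polyv_add polyv_const polyv_t)
  thus "polyv (\<lambda>t. cc1 t)" by (subst e)
next
  fix t
  show "cc1 t \<cdot> cc1 t = cc1 t"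
    apply (simp only: mulJ p1)
    apply (rule lc3_cong)
      apply (simp_all add: field_simps)
    done
next
  fix t
  define w where "w = lc3 a b n 1 1 (-2)"
  define h where "h = lc3 a b n (-1) 0 1"
  have aw: "a \<cdot> w = 0"
  proof -
    have "a \<cdot> w = lc3 a b n 1 0 0 \<cdot> lc3 a b n 1 1 (-2)" by (simp add: w_def lc3_def)
    also have "\<dots> = lc3 a b n 0 0 0"
      apply (simp only: mulJ p1)
      apply (rule lc3_cong)
        apply (simp_all add: field_simps)
      done
    finally show ?thesis by (simp add: lc3_def)
  qed
  have ah: "a \<cdot> h = half h"
  proof -
    have "a \<cdot> h = lc3 a b n 1 0 0 \<cdot> lc3 a b n (-1) 0 1" by (simp add: h_def lc3_def)
    also have "\<dots> = half h"
      unfolding h_def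
      apply (simp only: mulJ p1 lc3_scale)
      apply (rule lc3_cong)
        apply (simp_all add: field_simps)
      done
    finally show ?thesis .
  qed
  have "a + ((t*t)/4) *s w + t *s h \<noteq> 0"
    by (rule ne_dec) (simp_all add: scR aw ah scale_scale mult.commute)
  moreover have "a + ((t*t)/4) *s w + t *s h = cc1 t"
    unfolding w_def h_def
    apply (subst (1) a_lc)
    apply (simp only: lc3_scale lc3_add)
    apply (rule lc3_cong)
      apply (simp_all add: field_simps)
    done
  ultimately show "cc1 t \<noteq> 0" by simp
next
  show "cc1 0 = a" by (simp add: lc3_def)
next
  fix t
  have "tau b (tau a (cc1 t)) = tau (lc3 a b n 0 1 0) (tau (lc3 a b n 1 0 0) (cc1 t))"
    by (simp add: lc3_def)
  also have "\<dots> = cc1 (t + 4)"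
    apply (simp only: tau_alt mulJ lc3_scale lc3_diff lc3_add p1)
    apply (rule lc3_cong)
      apply (simp_all add: field_simps)
    done
  finally show "cc1 (t + 4) = tau b (tau a (cc1 t))" by simp
next
  fix y assume "prim_axis_half scale m y"
  thus "prim_axis_half scale m (tau b (tau a y))" by (rule ax_tau2(2))
qed


lemma eig_sc1: "x \<cdot> u = u \<Longrightarrow> x \<cdot> (c *s u) = c *s u" by (simp add: scR)
lemma eig_sc0: "x \<cdot> u = 0 \<Longrightarrow> x \<cdot> (c *s u) = 0" by (simp add: scR)
lemma eig_sch: "x \<cdot> u = half u \<Longrightarrow> x \<cdot> (c *s u) = half (c *s u)" by (simp add: scR scale_scale mult.commute)

lemma idem01: "(x::'a) * x = x \<Longrightarrow> x = 0 \<or> x = 1"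
  by (metis mult_cancel_left2 mult_zero_right)

lemma swap_twoax: "twoax scale m f b a"
  by (intro twoax.intro jfrob_axioms twoax_axioms.intro axa axb)

lemma solid_phi0:
  assumes p0: "\<phi> = 0"
  shows "solid scale m (gen_subalg scale m {a, b})"
  unfolding solid_def
proof (intro ballI impI, elim conjE)
  fix c assume cJ: "c \<in> gen_subalg scale m {a, b}" and cc: "c \<cdot> c = c" and c0: "c \<noteq> 0"
    and nid: "\<not> (\<forall>u\<in>gen_subalg scale m {a, b}. c \<cdot> u = u)"
  obtain x y z where c: "c = lc3 a b n x y z" using J_sub[OF cJ] by blast
  define b0 where "b0 = lc3 a b n 0 1 (-2)"
  define z' where "z' = 2*y + z"
  have n1: "lc3 a b n 0 0 1 = n" by (simp add: lc3_def)
  have a1: "lc3 a b n 1 0 0 = a" by (simp add: lc3_def)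
  have ab0: "a \<cdot> b0 = 0"
  proof -
    have "a \<cdot> b0 = lc3 a b n 1 0 0 \<cdot> lc3 a b n 0 1 (-2)" by (simp add: b0_def lc3_def)
    also have "\<dots> = lc3 a b n 0 0 0"
      apply (simp only: mulJ p0) apply (rule lc3_cong) apply (simp_all add: field_simps) done
    finally show ?thesis by (simp add: lc3_def)
  qed
  have an': "a \<cdot> n = half n" using an p0 by (simp add: lc3_def)
  have cdec: "c = x *s a + y *s b0 + z' *s n"
  proof -
    have "x *s lc3 a b n 1 0 0 + y *s lc3 a b n 0 1 (-2) + z' *s lc3 a b n 0 0 1 = lc3 a b n x y z"
      apply (simp only: lc3_scale lc3_add) apply (rule lc3_cong) apply (simp_all add: z'_def field_simps) done
    thus ?thesis using c a1 n1 b0_def by simp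
  qed
  have ccdec: "c \<cdot> c = (x*x) *s a + (y*y) *s b0 + ((x+y)*z') *s n"
  proof -
    have "c \<cdot> c = lc3 a b n (x*x) (y*y) (2*x*y + x*z + y*z)"
      unfolding c apply (simp only: mulJ p0) apply (rule lc3_cong) apply (simp_all add: field_simps) done
    also have "\<dots> = (x*x) *s lc3 a b n 1 0 0 + (y*y) *s lc3 a b n 0 1 (-2) + ((x+y)*z') *s lc3 a b n 0 0 1"
      apply (simp only: lc3_scale lc3_add) apply (rule lc3_cong) apply (simp_all add: z'_def field_simps) done
    finally show ?thesis using a1 n1 b0_def by simp
  qed
  have U: "(x*x) *s a = x *s a" "(y*y) *s b0 = y *s b0" "((x+y)*z') *s n = z' *s n"
    using decomp_unique[OF eig_sc1[OF aa] eig_sc0[OF ab0] eig_sch[OF an'] eig_sc1[OF aa] eig_sc0[OF ab0] eig_sch[OF an']]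
      cdec ccdec cc by metis+
  have x01: "x = 0 \<or> x = 1" using U(1) ax_ne[OF axa] idem01 by simp
  have b0ne: "b0 \<noteq> 0"
  proof
    assume "b0 = 0"
    hence "b = lc3 a b n 0 0 2"
    proof -
      have "b = b0 + lc3 a b n 0 0 2" unfolding b0_def by (subst (1) b_lc) simp
      thus ?thesis using \<open>b0 = 0\<close> by simp
    qed
    hence "b \<cdot> b = lc3 a b n 0 0 2 \<cdot> lc3 a b n 0 0 2" by simp
    also have "\<dots> = lc3 a b n 0 0 0" by (simp only: mulJ p0) simp
    finally have "b = 0" using bb by (simp add: lc3_def)
    thus False using ax_ne[OF axb] by simp
  qed
  have y01: "y = 0 \<or> y = 1" using U(2) b0ne idem01 by simp
  show "prim_axis_half scale m c"
  proof (cases "x = 0")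
    case x0: True
    show ?thesis
    proof (cases "y = 0")
      case True
      hence "z' *s n = 0" using U(3) x0 by simp
      hence "c = 0" using cdec x0 True by simp
      thus ?thesis using c0 by simp
    next
      case False
      hence y1: "y = 1" using y01 by simp
      interpret S: twoax scale m f b a by (rule swap_twoax)
      have "prim_axis_half scale m (lc3 b a (b \<cdot> a) 1 0 (z' - 2))"
        by (rule S.phi0_axis) (use fba p0 in simp)
      moreover have "lc3 b a (b \<cdot> a) 1 0 (z' - 2) = c"
      proof -
        have "lc3 b a (b \<cdot> a) 1 0 (z' - 2) = lc3 a b n 0 1 (z' - 2)" using ba by (simp add: lc3_def add_ac)
        also have "\<dots> = lc3 a b n x y z" apply (rule lc3_cong) apply (simp_all add: x0 y1 z'_def) done
        finally show ?thesis using c by simp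
      qed
      ultimately show ?thesis by simp
    qed
  next
    case False
    hence x1: "x = 1" using x01 by simp
    show ?thesis
    proof (cases "y = 0")
      case True
      have "c = lc3 a b n 1 0 z'" using c x1 True by (simp add: z'_def)
      thus ?thesis using phi0_axis[OF p0] by simp
    next
      case False
      hence y1: "y = 1" using y01 by simp
      have "(2*z') *s n = z' *s n" using U(3) x1 y1 by simp
      hence "z' *s n = 0" by (metis add_cancel_right_right mult_2 scale_left_distrib)
      hence ce: "c = lc3 a b n 1 1 (-2)" using cdec x1 y1 a1 b0_def by (simp add: lc3_def)
      have "\<forall>u\<in>gen_subalg scale m {a, b}. c \<cdot> u = u"
      proof
        fix u assume "u \<in> gen_subalg scale m {a, b}"
        then obtain x' y' z'' where u: "u = lc3 a b n x' y' z''" using J_sub by blast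
        show "c \<cdot> u = u" unfolding u ce
          apply (simp only: mulJ p0) apply (rule lc3_cong) apply (simp_all add: field_simps) done
      qed
      thus ?thesis using nid by simp
    qed
  qed
qed


lemma solid_phi1:
  assumes p1: "\<phi> = 1"
  shows "solid scale m (gen_subalg scale m {a, b})"
  unfolding solid_def
proof (intro ballI impI, elim conjE)
  fix c assume cJ: "c \<in> gen_subalg scale m {a, b}" and cc: "c \<cdot> c = c" and c0: "c \<noteq> 0"
  obtain x y z where c: "c = lc3 a b n x y z" using J_sub[OF cJ] by blast
  define w where "w = lc3 a b n 1 1 (-2)"
  define h where "h = lc3 a b n (-1) 0 1"
  define X where "X = x + y + z"
  define Z where "Z = 2*y + z"
  have a1: "lc3 a b n 1 0 0 = a" by (simp add: lc3_def)
  have aw: "a \<cdot> w = 0"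
  proof -
    have "a \<cdot> w = lc3 a b n 1 0 0 \<cdot> lc3 a b n 1 1 (-2)" by (simp add: w_def lc3_def)
    also have "\<dots> = lc3 a b n 0 0 0"
      apply (simp only: mulJ p1) apply (rule lc3_cong) apply (simp_all add: field_simps) done
    finally show ?thesis by (simp add: lc3_def)
  qed
  have ah: "a \<cdot> h = half h"
  proof -
    have "a \<cdot> h = lc3 a b n 1 0 0 \<cdot> lc3 a b n (-1) 0 1" by (simp add: h_def lc3_def)
    also have "\<dots> = half h"
      unfolding h_def apply (simp only: mulJ p1 lc3_scale) apply (rule lc3_cong) apply (simp_all add: field_simps) done
    finally show ?thesis .
  qed
  have ww: "w \<cdot> w = 0"
  proof -
    have "w \<cdot> w = lc3 a b n 0 0 0"
      unfolding w_def apply (simp only: mulJ p1) apply (rule lc3_cong) apply (simp_all add: field_simps) done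
    thus ?thesis by (simp add: lc3_def)
  qed
  have cdec: "c = X *s a + y *s w + Z *s h"
  proof -
    have "X *s lc3 a b n 1 0 0 + y *s lc3 a b n 1 1 (-2) + Z *s lc3 a b n (-1) 0 1 = lc3 a b n x y z"
      apply (simp only: lc3_scale lc3_add) apply (rule lc3_cong) apply (simp_all add: X_def Z_def field_simps) done
    thus ?thesis using c a1 w_def h_def by simp
  qed
  have ccdec: "c \<cdot> c = (X*X) *s a + (Z*Z/4) *s w + (X*Z) *s h"
  proof -
    have "c \<cdot> c = lc3 a b n (x*x + x*z + z*z/4) (y*y + y*z + z*z/4) (2*x*y + x*z + y*z + z*z/2)"
      unfolding c apply (simp only: mulJ p1) apply (rule lc3_cong) apply (simp_all add: field_simps) done
    also have "\<dots> = (X*X) *s lc3 a b n 1 0 0 + (Z*Z/4) *s lc3 a b n 1 1 (-2) + (X*Z) *s lc3 a b n (-1) 0 1"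
      apply (simp only: lc3_scale lc3_add) apply (rule lc3_cong) apply (simp_all add: X_def Z_def field_simps) done
    finally show ?thesis using a1 w_def h_def by simp
  qed
  have U: "(X*X) *s a = X *s a" "(Z*Z/4) *s w = y *s w" "(X*Z) *s h = Z *s h"
    using decomp_unique[OF eig_sc1[OF aa] eig_sc0[OF aw] eig_sch[OF ah] eig_sc1[OF aa] eig_sc0[OF aw] eig_sch[OF ah]]
      cdec ccdec cc by metis+
  have X01: "X = 0 \<or> X = 1" using U(1) ax_ne[OF axa] idem01 by simp
  show "prim_axis_half scale m c"
  proof (cases "X = 0")
    case True
    hence "Z *s h = 0" using U(3) by simp
    hence cy: "c = y *s w" using cdec True by simp
    hence "c \<cdot> c = y *s (y *s (w \<cdot> w))" by (simp add: scL scR)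
    hence "c = 0" using ww cc by simp
    thus ?thesis using c0 by simp
  next
    case False
    hence X1: "X = 1" using X01 by simp
    have "c = a + (Z*Z/4) *s w + Z *s h" using cdec X1 by (simp only: U(2)[symmetric] scale_one)
    also have "\<dots> = cc1 Z"
      unfolding w_def h_def
      apply (subst (1) a_lc)
      apply (simp only: lc3_scale lc3_add)
      apply (rule lc3_cong)
        apply (simp_all add: field_simps)
      done
    finally show ?thesis using phi1_axis[OF p1] by simp
  qed
qed

end

theorem theorem2_aux:
  fixes sc :: "'a::field_char_0 \<Rightarrow> 'v::ab_group_add \<Rightarrow> 'v"
    and m :: "'v \<Rightarrow> 'v \<Rightarrow> 'v"
    and f :: "'v \<Rightarrow> 'v \<Rightarrow> 'a"
    and a b :: 'v
  assumes "jordan_type_half sc m"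
    and "frobenius_form sc m f"
    and "prim_axis_half sc m a" and "prim_axis_half sc m b"
    and "f a b = 0 \<or> f a b = 1"
  shows "solid sc m (gen_subalg sc m {a, b})"
proof -
  have ca: "comm_algebra sc m" using assms(1) unfolding jordan_type_half_def by blast
  interpret twoax sc m f a b
  proof (intro twoax.intro jfrob.intro jalg.intro twoax_axioms.intro jfrob_axioms.intro jalg_axioms.intro)
    show "vector_space sc" using ca unfolding comm_algebra_def by blast
    show "m u v = m v u" for u v using ca unfolding comm_algebra_def by blast
    show "m (u + v) w = m u w + m v w" for u v w using ca unfolding comm_algebra_def by blast
    show "m (sc c u) w = sc c (m u w)" for c u w using ca unfolding comm_algebra_def by blast
  qed (use assms in auto)
  show ?thesis using assms(5) solid_phi0 solid_phi1 by blast
qed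



theorem theorem2:
  fixes sc :: "'a::field_char_0 \<Rightarrow> 'v::ab_group_add \<Rightarrow> 'v"
    and m :: "'v \<Rightarrow> 'v \<Rightarrow> 'v"
    and f :: "'v \<Rightarrow> 'v \<Rightarrow> 'a"
    and a b :: 'v
  assumes "jordan_type_half sc m"
    and "frobenius_form sc m f"
    and "prim_axis_half sc m a" and "prim_axis_half sc m b"
    and "f a b = 0 \<or> f a b = 1"
  shows "solid sc m (gen_subalg sc m {a, b})"
  using assms by (rule theorem2_aux)

end
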